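(* Let $d_1,d_2\ge1$ be integers, $p_{i0}<\cdots<p_{id_i}$ reals for $i=1,2$, and $f_i:\{p_{i0},\dots,p_{id_i}\}\to\mathbb{R}$ arbitrary. Let $\sigma=(\sigma_1,\sigma_2)$ with $\sigma_i$ a permutation of $\{0,\dots,d_i\}$ such that $f_i(p_{i,\sigma_i(0)})\le\cdots\le f_i(p_{i,\sigma_i(d_i)})$ for $i=1,2$, and let $\tau=(\tau_1,\tau_2)$ be permutations with $f_1(p_{1,\tau_1(0)})\le\cdots\le f_1(p_{1,\tau_1(d_1)})$ and $f_2(p_{2,\tau_2(0)})\ge\cdots\ge f_2(p_{2,\tau_2(d_2)})$. Put $\psi^\sigma(\boldsymbol{j})=f_1(p_{1,\sigma_1(j_1)})f_2(p_{2,\sigma_2(j_2)})$ and $\psi^\tau(\boldsymbol{j})=f_1(p_{1,\tau_1(j_1)})f_2(p_{2,\tau_2(j_2)})$ for $\boldsymbol{j}\in\{0,\dots,d_1\}\times\{0,\dots,d_2\}$, and $N=d_1+d_2$. Then the set of $(\boldsymbol{x},\boldsymbol{z},\mu)$ with $\boldsymbol{z}\in\{0,1\}^{d_1+d_2}$, $(x_i,\boldsymbol{z}_i)\in B_i$ for $i=1,2$, $\boldsymbol{z}'=(L^\sigma)^{-1}(\boldsymbol{z})$, $\boldsymbol{z}''=(L^\tau)^{-1}(\boldsymbol{z})$ and, for every $\pi\in\Pi$ (with point representation $\boldsymbol{j}^0,\dots,\boldsymbol{j}^N$), $$\mu\le\psi^\sigma(\boldsymbol{j}^0)+\sum_{t\in[N]}(\psi^\sigma(\boldsymbol{j}^t)-\psi^\sigma(\boldsymbol{j}^{t-1}))z'_{\pi_t},\qquad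 \mu\ge\psi^\tau(\boldsymbol{j}^0)+\sum_{t\in[N]}(\psi^\tau(\boldsymbol{j}^t)-\psi^\tau(\boldsymbol{j}^{t-1}))z''_{\pi_t},$$ is an ideal MIP formulation of $\{(\boldsymbol{x},\mu)\in\mathbb{R}^2\times\mathbb{R}:\mu=f_1(x_1)f_2(x_2),\ x_i\in\{p_{i0},\dots,p_{id_i}\},\ i=1,2\}$.
   Context: Here $n=2$. $\Delta^d=\{\boldsymbol{z}\in\mathbb{R}^d:1\ge z_1\ge\cdots\ge z_d\ge0\}$; $\boldsymbol{z}=(\boldsymbol{z}_1,\boldsymbol{z}_2)$, $\boldsymbol{z}_i\in\mathbb{R}^{d_i}$. $B_i=\{(x_i,\boldsymbol{z}_i):x_i=p_{i0}+\sum_{j\in[d_i]}(p_{ij}-p_{i,j-1})z_{ij},\ \boldsymbol{z}_i\in\Delta^{d_i}\}$. A staircase is $\pi=(\pi_1,\dots,\pi_N)$, $\pi_t=(\pi_t(1),\pi_t(2))$, $\pi_t(1)\in\{1,2\}$, each $i$ occurring as $\pi_t(1)$ exactly $d_i$ times, $\pi_t(2)=|\{s\le t:\pi_s(1)=\pi_t(1)\}|$; $\Pi$ is the set of staircases; $z_{\pi_t}:=z_{\pi_t(1),\pi_t(2)}$; point representation $\boldsymbol{j}^0=(0,0)$, $\boldsymbol{j}^t=\boldsymbol{j}^{t-1}+\boldsymbol{e}_{\pi_t(1)}$. For a permutation $\rho_i$ of $\{0,\dots,d_i\}$: $T_i:\boldsymbol{z}_i\mapsto\boldsymbol{\lambda}_i\in\mathbb{R}^{d_i+1}$,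 $\lambda_{ij}=z_{ij}-z_{i,j+1}$ ($j=0,\dots,d_i$, $z_{i0}=1$, $z_{i,d_i+1}=0$), $T_i^{-1}:z_{ij}=\sum_{k=j}^{d_i}\lambda_{ik}$; $P^{\rho_i}$ the permutation matrix with $(j,k)$ entry $1$ iff $j=\rho_i(k)$; $L^{\rho_i}=T_i^{-1}\circ P^{\rho_i}\circ T_i$ and $L^\rho(\boldsymbol{z}')=(L^{\rho_1}(\boldsymbol{z}'_1),L^{\rho_2}(\boldsymbol{z}'_2))$ (an invertible affine map). An MIP formulation of $S$ is a polyhedron with binary restrictions whose projection onto original variables equals $S$; ideal means every vertex of the LP relaxation has binary values in the binary-restricted variables. *)

theory Defs
  imports "HOL-Analysis.Analysis" "HOL-Combinatorics.Permutations"
begin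

text \<open>Points of the extended space are triples (x, z, mu) with x :: nat => real
  (only x 1, x 2 relevant), z :: nat => nat => real (z i j for i in {1,2}, j in {1..d i})
  and mu :: real.  All irrelevant coordinates are forced to 0 inside the polyhedron,
  so the space is effectively R^2 x R^(d1+d2) x R.\<close>

type_synonym point = "(nat \<Rightarrow> real) \<times> (nat \<Rightarrow> nat \<Rightarrow> real) \<times> real"

definition comb :: "real \<Rightarrow> point \<Rightarrow> point \<Rightarrow> point" where
  "comb t a b = (\<lambda>i. t * fst a i + (1 - t) * fst b i,
                 \<lambda>i j. t * fst (snd a) i j + (1 - t) * fst (snd b) i j,
                 t * snd (snd a) + (1 - t) * snd (snd b))"

definition is_vertex :: "point \<Rightarrow> point set \<Rightarrow> bool" where
  "is_vertex v Q \<longleftrightarrow> v \<in> Q \<and>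
     \<not> (\<exists>a\<in>Q. \<exists>b\<in>Q. \<exists>t. a \<noteq> b \<and> 0 < t \<and> t < 1 \<and> v = comb t a b)"

definition ideal_MIP_formulation ::
  "point set \<Rightarrow> (point \<Rightarrow> bool) \<Rightarrow> (point \<Rightarrow> 'b) \<Rightarrow> 'b set \<Rightarrow> bool" where
  "ideal_MIP_formulation Q bin proj S \<longleftrightarrow>
     proj ` {v \<in> Q. bin v} = S \<and> (\<forall>v. is_vertex v Q \<longrightarrow> bin v)"

definition in_Delta :: "nat \<Rightarrow> (nat \<Rightarrow> real) \<Rightarrow> bool" where
  "in_Delta d z \<longleftrightarrow> (d \<ge> 1 \<longrightarrow> z 1 \<le> 1 \<and> z d \<ge> 0) \<and>
                      (\<forall>j. 1 \<le> j \<and> j < d \<longrightarrow> z (j+1) \<le> z j)"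

definition in_B :: "nat \<Rightarrow> (nat \<Rightarrow> real) \<Rightarrow> real \<Rightarrow> (nat \<Rightarrow> real) \<Rightarrow> bool" where
  "in_B d p x z \<longleftrightarrow> x = p 0 + (\<Sum>j\<in>{1..d}. (p j - p (j - 1)) * z j) \<and> in_Delta d z"

definition Tmap :: "nat \<Rightarrow> (nat \<Rightarrow> real) \<Rightarrow> nat \<Rightarrow> real" where
  "Tmap d z j = (let ze = (\<lambda>m. if m = 0 then 1 else if m \<le> d then z m else 0)
                  in ze j - ze (j + 1))"

definition Tinv :: "nat \<Rightarrow> (nat \<Rightarrow> real) \<Rightarrow> nat \<Rightarrow> real" where
  "Tinv d lam j = (\<Sum>k\<in>{j..d}. lam k)"

definition Pmat :: "nat \<Rightarrow> (nat \<Rightarrow> nat) \<Rightarrow> (nat \<Rightarrow> real) \<Rightarrow> nat \<Rightarrow> real" where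
  "Pmat d \<rho> lam j = (\<Sum>k\<in>{0..d}. (if j = \<rho> k then 1 else 0) * lam k)"

definition Lmap :: "nat \<Rightarrow> (nat \<Rightarrow> nat) \<Rightarrow> (nat \<Rightarrow> real) \<Rightarrow> nat \<Rightarrow> real" where
  "Lmap d \<rho> z = Tinv d (Pmat d \<rho> (Tmap d z))"

text \<open>Staircases: s t = pi_t(1) for t in {1..N}; i occurs exactly d i times.\<close>
definition is_staircase :: "(nat \<Rightarrow> nat) \<Rightarrow> (nat \<Rightarrow> nat) \<Rightarrow> bool" where
  "is_staircase d s \<longleftrightarrow> (\<forall>t\<in>{1..d 1 + d 2}. s t \<in> {1, 2}) \<and>
     (\<forall>i\<in>{1,2}. card {t\<in>{1..d 1 + d 2}. s t = i} = d i)"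

text \<open>pi_t(2) = |{u <= t : pi_u(1) = pi_t(1)}|.\<close>
definition stair2 :: "(nat \<Rightarrow> nat) \<Rightarrow> nat \<Rightarrow> nat" where
  "stair2 s t = card {u\<in>{1..t}. s u = s t}"

fun jpt :: "(nat \<Rightarrow> nat) \<Rightarrow> nat \<Rightarrow> nat \<times> nat" where
  "jpt s 0 = (0, 0)"
| "jpt s (Suc t) = (let (a, b) = jpt s t in
                     if s (Suc t) = 1 then (a + 1, b) else (a, b + 1))"

definition stair_rhs :: "(nat \<times> nat \<Rightarrow> real) \<Rightarrow> (nat \<Rightarrow> nat) \<Rightarrow> (nat \<Rightarrow> nat) \<Rightarrow>
                         (nat \<Rightarrow> nat \<Rightarrow> real) \<Rightarrow> real" where
  "stair_rhs psi d s zz = psi (jpt s 0) +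
     (\<Sum>t\<in>{1..d 1 + d 2}. (psi (jpt s t) - psi (jpt s (t - 1))) * zz (s t) (stair2 s t))"

definition psi :: "(nat \<Rightarrow> real \<Rightarrow> real) \<Rightarrow> (nat \<Rightarrow> nat \<Rightarrow> real) \<Rightarrow> (nat \<Rightarrow> nat \<Rightarrow> nat)
                   \<Rightarrow> nat \<times> nat \<Rightarrow> real" where
  "psi f p \<rho> jj = f 1 (p 1 (\<rho> 1 (fst jj))) * f 2 (p 2 (\<rho> 2 (snd jj)))"

definition Qset :: "(nat \<Rightarrow> nat) \<Rightarrow> (nat \<Rightarrow> nat \<Rightarrow> real) \<Rightarrow> (nat \<Rightarrow> real \<Rightarrow> real)
                   \<Rightarrow> (nat \<Rightarrow> nat \<Rightarrow> nat) \<Rightarrow> (nat \<Rightarrow> nat \<Rightarrow> nat) \<Rightarrow> point set" where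
  "Qset d p f \<sigma> \<tau> = {(x, z, \<mu>).
     (\<forall>i. i \<notin> {1,2} \<longrightarrow> x i = 0) \<and>
     (\<forall>i j. \<not> (i \<in> {1,2} \<and> j \<in> {1..d i}) \<longrightarrow> z i j = 0) \<and>
     (\<forall>i\<in>{1,2}. in_B (d i) (p i) (x i) (z i)) \<and>
     (\<exists>z' z''.
        (\<forall>i\<in>{1,2}. \<forall>j\<in>{1..d i}. z i j = Lmap (d i) (\<sigma> i) (z' i) j) \<and>
        (\<forall>i\<in>{1,2}. \<forall>j\<in>{1..d i}. z i j = Lmap (d i) (\<tau> i) (z'' i) j) \<and>
        (\<forall>s. is_staircase d s \<longrightarrow>
              \<mu> \<le> stair_rhs (psi f p \<sigma>) d s z' \<and>
              \<mu> \<ge> stair_rhs (psi f p \<tau>) d s z''))}"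

definition binary_z :: "(nat \<Rightarrow> nat) \<Rightarrow> point \<Rightarrow> bool" where
  "binary_z d v \<longleftrightarrow> (\<forall>i\<in>{1,2}. \<forall>j\<in>{1..d i}. fst (snd v) i j \<in> {0, 1})"

definition proj_xmu :: "point \<Rightarrow> (nat \<Rightarrow> real) \<times> real" where
  "proj_xmu v = (fst v, snd (snd v))"

definition Sset :: "(nat \<Rightarrow> nat) \<Rightarrow> (nat \<Rightarrow> nat \<Rightarrow> real) \<Rightarrow> (nat \<Rightarrow> real \<Rightarrow> real)
                   \<Rightarrow> ((nat \<Rightarrow> real) \<times> real) set" where
  "Sset d p f = {(x, \<mu>). (\<forall>i. i \<notin> {1,2} \<longrightarrow> x i = 0) \<and>
      \<mu> = f 1 (x 1) * f 2 (x 2) \<and> (\<forall>i\<in>{1,2}. x i \<in> p i ` {0..d i})}"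

end

theory Submission
  imports Defs
begin

definition ind :: "nat \<Rightarrow> nat \<Rightarrow> real" where "ind a j = (if j \<le> a then 1 else 0)"

definition ext :: "nat \<Rightarrow> (nat \<Rightarrow> real) \<Rightarrow> nat \<Rightarrow> real" where
 "ext d y m = (if m = 0 then 1 else if m \<le> d then y m else 0)"

lemma Tmap_ext: "Tmap d y k = ext d y k - ext d y (k+1)"
  by (simp add: Tmap_def ext_def Let_def)

lemma Tmap_sum: assumes "j \<le> d + 1" shows "(\<Sum>k\<in>{j..d}. Tmap d y k) = ext d y j"
proof -
  have "(\<Sum>k\<in>{j..d}. Tmap d y k) = - (\<Sum>k=j..d. ext d y (Suc k) - ext d y k)"
    by (simp add: Tmap_ext sum_negf[symmetric])
  also have "\<dots> = - (ext d y (Suc d) - ext d y j)" using assms by (subst sum_Suc_diff) auto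
  also have "\<dots> = ext d y j" by (simp add: ext_def)
  finally show ?thesis .
qed

lemma Tmap_sum_all: "(\<Sum>k\<in>{0..d}. Tmap d y k) = 1"
  using Tmap_sum[of 0 d y] by (simp add: ext_def)

lemma Lmap_formula: assumes "\<rho> permutes {0..d}"
  shows "Lmap d \<rho> y j = (\<Sum>k\<in>{0..d}. of_bool (j \<le> \<rho> k) * Tmap d y k)"
proof -
  have "Lmap d \<rho> y j = (\<Sum>m\<in>{j..d}. \<Sum>k\<in>{0..d}. (if m = \<rho> k then 1 else 0) * Tmap d y k)"
    by (simp add: Lmap_def Tinv_def Pmat_def)
  also have "\<dots> = (\<Sum>k\<in>{0..d}. \<Sum>m\<in>{j..d}. (if m = \<rho> k then 1 else 0) * Tmap d y k)"
    by (rule sum.swap)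
  also have "\<dots> = (\<Sum>k\<in>{0..d}. of_bool (j \<le> \<rho> k) * Tmap d y k)"
  proof (rule sum.cong[OF refl])
    fix k assume k: "k \<in> {0..d}"
    then have "\<rho> k \<le> d" using permutes_in_image[OF assms] by auto
    then show "(\<Sum>m\<in>{j..d}. (if m = \<rho> k then 1 else 0) * Tmap d y k) = of_bool (j \<le> \<rho> k) * Tmap d y k"
      by (simp add: if_distrib[of "\<lambda>x. x * _"] sum.delta cong: if_cong)
  qed
  finally show ?thesis .
qed

lemma Tmap_cong: assumes "\<forall>j\<in>{1..d}. y j = y' j" shows "Tmap d y = Tmap d y'"
  using assms by (auto simp: Tmap_def Let_def fun_eq_iff)

lemma Lmap_cong: assumes "\<forall>j\<in>{1..d}. y j = y' j" shows "Lmap d \<rho> y = Lmap d \<rho> y'"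
  using Tmap_cong[OF assms] by (simp add: Lmap_def)

lemma ext_Lmap: assumes "\<rho> permutes {0..d}" "m \<le> d + 1"
  shows "ext d (Lmap d \<rho> y) m = (\<Sum>k\<in>{0..d}. of_bool (m \<le> \<rho> k) * Tmap d y k)"
proof -
  have r: "\<rho> k \<le> d" if "k \<in> {0..d}" for k using permutes_in_image[OF assms(1)] that by auto
  consider "m = 0" | "1 \<le> m \<and> m \<le> d" | "m = d + 1" using assms(2) by linarith
  then show ?thesis
  proof cases
    case 1 then show ?thesis using Tmap_sum_all by (simp add: ext_def)
  next
    case 2 then show ?thesis using Lmap_formula[OF assms(1)] by (simp add: ext_def)
  next
    case 3
    then have "(\<Sum>k\<in>{0..d}. of_bool (m \<le> \<rho> k) * Tmap d y k) = 0"
      using r by (intro sum.neutral) (auto simp: not_le[symmetric] dest: r)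
    then show ?thesis using 3 by (simp add: ext_def)
  qed
qed

lemma Tmap_Lmap: assumes "\<rho> permutes {0..d}" "m \<le> d"
  shows "Tmap d (Lmap d \<rho> y) m = Tmap d y (inv \<rho> m)"
proof -
  have "Tmap d (Lmap d \<rho> y) m = (\<Sum>k\<in>{0..d}. of_bool (m \<le> \<rho> k) * Tmap d y k)
      - (\<Sum>k\<in>{0..d}. of_bool (m + 1 \<le> \<rho> k) * Tmap d y k)"
    using assms by (simp add: Tmap_ext ext_Lmap)
  also have "\<dots> = (\<Sum>k\<in>{0..d}. (if k = inv \<rho> m then Tmap d y k else 0))"
    unfolding sum_subtractf[symmetric]
  proof (rule sum.cong[OF refl])
    fix k
    have "(\<rho> k = m) = (k = inv \<rho> m)" using permutes_inv_eq[OF assms(1)] by metis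
    then show "of_bool (m \<le> \<rho> k) * Tmap d y k - of_bool (m + 1 \<le> \<rho> k) * Tmap d y k =
         (if k = inv \<rho> m then Tmap d y k else 0)" by auto
  qed
  also have "\<dots> = Tmap d y (inv \<rho> m)"
  proof -
    have "inv \<rho> m \<in> {0..d}" using assms permutes_in_image[OF permutes_inv[OF assms(1)]] by auto
    then show ?thesis by (simp add: sum.delta')
  qed
  finally show ?thesis .
qed

lemma Lmap_inv: assumes "\<rho> permutes {0..d}" "j \<in> {1..d}"
  shows "Lmap d (inv \<rho>) (Lmap d \<rho> y) j = y j"
proof -
  have ip: "inv \<rho> permutes {0..d}" using permutes_inv[OF assms(1)] .
  have "Lmap d (inv \<rho>) (Lmap d \<rho> y) j = (\<Sum>m\<in>{0..d}. of_bool (j \<le> inv \<rho> m) * Tmap d (Lmap d \<rho> y) m)"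
    by (rule Lmap_formula[OF ip])
  also have "\<dots> = (\<Sum>m\<in>{0..d}. of_bool (j \<le> inv \<rho> m) * Tmap d y (inv \<rho> m))"
    using Tmap_Lmap[OF assms(1)] by (intro sum.cong) auto
  also have "\<dots> = (\<Sum>k\<in>{0..d}. of_bool (j \<le> k) * Tmap d y k)"
    by (rule sum.reindex_bij_betw[OF permutes_imp_bij[OF ip], of "\<lambda>k. of_bool (j \<le> k) * Tmap d y k"])
  also have "\<dots> = (\<Sum>k\<in>{j..d}. Tmap d y k)"
    by (rule sum.mono_neutral_cong_right) auto
  also have "\<dots> = y j" using assms by (simp add: Tmap_sum ext_def)
  finally show ?thesis .
qed

lemma Lmap_ind: assumes "\<rho> permutes {0..d}" "a \<le> d"
  shows "Lmap d \<rho> (ind a) j = ind (\<rho> a) j"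
proof -
  have T: "Tmap d (ind a) k = of_bool (k = a)" if "k \<le> d" for k
    using assms(2) that by (auto simp: Tmap_def ind_def Let_def)
  have "Lmap d \<rho> (ind a) j = (\<Sum>k\<in>{0..d}. of_bool (j \<le> \<rho> k) * of_bool (k = a))"
    using Lmap_formula[OF assms(1)] T by (auto intro!: sum.cong)
  also have "\<dots> = (\<Sum>k\<in>{0..d}. if k = a then of_bool (j \<le> \<rho> k) else 0)"
    by (intro sum.cong) auto
  also have "\<dots> = ind (\<rho> a) j" using assms(2) by (simp add: sum.delta' ind_def)
  finally show ?thesis .
qed

lemma Tmap_nonneg: assumes "in_Delta d y" "1 \<le> d" "k \<le> d" shows "0 \<le> Tmap d y k"
proof (cases "k = d")
  case True then show ?thesis using assms by (auto simp: Tmap_def Let_def in_Delta_def)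
next
  case False then show ?thesis using assms by (auto simp: Tmap_def Let_def in_Delta_def)
qed

lemma Lmap_Delta: assumes "\<rho> permutes {0..d}" "in_Delta d y" "1 \<le> d"
  shows "in_Delta d (Lmap d \<rho> y)"
proof -
  have nn: "0 \<le> Tmap d y k" if "k \<in> {0..d}" for k using Tmap_nonneg assms that by auto
  have "Lmap d \<rho> y 1 \<le> (\<Sum>k\<in>{0..d}. Tmap d y k)"
    unfolding Lmap_formula[OF assms(1)] using nn by (intro sum_mono) auto
  moreover have "0 \<le> Lmap d \<rho> y d"
    unfolding Lmap_formula[OF assms(1)] using nn by (intro sum_nonneg) auto
  moreover have "Lmap d \<rho> y (j+1) \<le> Lmap d \<rho> y j" for j
    unfolding Lmap_formula[OF assms(1)] using nn by (intro sum_mono) auto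
  ultimately show ?thesis using Tmap_sum_all by (simp add: in_Delta_def)
qed

lemma Lmap_affine:
  assumes "\<rho> permutes {0..d}" "finite A" "(\<Sum>t\<in>A. w t) = 1"
    and "\<forall>k\<in>{1..d}. y k = (\<Sum>t\<in>A. w t * Y t k)"
  shows "Lmap d \<rho> y j = (\<Sum>t\<in>A. w t * Lmap d \<rho> (Y t) j)"
proof -
  have E: "ext d y m = (\<Sum>t\<in>A. w t * ext d (Y t) m)" for m
    using assms(3,4) by (auto simp: ext_def sum_distrib_right[symmetric])
  have T: "Tmap d y k = (\<Sum>t\<in>A. w t * Tmap d (Y t) k)" for k
    unfolding Tmap_ext E by (simp add: sum_subtractf[symmetric] right_diff_distrib)
  show ?thesis
    unfolding Lmap_formula[OF assms(1)] T sum_distrib_left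
    by (subst sum.swap) (simp only: mult_ac)
qed



definition co :: "nat \<times> nat \<Rightarrow> nat \<Rightarrow> nat" where "co c i = (if i = 1 then fst c else snd c)"

lemma jpt_Suc_fst: "fst (jpt s (Suc t)) = fst (jpt s t) + (if s (Suc t) = 1 then 1 else 0)"
  by (simp add: split_def Let_def)
lemma jpt_Suc_snd: "snd (jpt s (Suc t)) = snd (jpt s t) + (if s (Suc t) = 1 then 0 else 1)"
  by (simp add: split_def Let_def)

declare jpt.simps(2)[simp del]

lemma filt_Suc: "{u\<in>{1..Suc t}. P u} = (if P (Suc t) then insert (Suc t) {u\<in>{1..t}. P u} else {u\<in>{1..t}. P u})"
  by (auto simp: le_Suc_eq)

lemma jpt_card: "fst (jpt s t) = card {u\<in>{1..t}. s u = 1} \<and> snd (jpt s t) = card {u\<in>{1..t}. s u \<noteq> 1}"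
proof (induction t)
  case 0 then show ?case by simp
next
  case (Suc t)
  then show ?case unfolding jpt_Suc_fst jpt_Suc_snd filt_Suc[of _ "\<lambda>u. s u = 1"] filt_Suc[of _ "\<lambda>u. s u \<noteq> 1"]
    by (auto simp: card_insert_disjoint)
qed

lemma jpt_mono: "t \<le> t' \<Longrightarrow> fst (jpt s t) \<le> fst (jpt s t') \<and> snd (jpt s t) \<le> snd (jpt s t')"
proof (induction t' rule: dec_induct)
  case base then show ?case by simp
next
  case (step n) then show ?case by (simp add: jpt_Suc_fst jpt_Suc_snd)
qed

lemma stair_vals: "is_staircase d s \<Longrightarrow> t \<in> {1..d 1 + d 2} \<Longrightarrow> s t = 1 \<or> s t = 2"
  by (auto simp: is_staircase_def)

lemma jpt_N: assumes "is_staircase d s" shows "jpt s (d 1 + d 2) = (d 1, d 2)"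
proof -
  have "{u\<in>{1..d 1 + d 2}. s u \<noteq> 1} = {u\<in>{1..d 1 + d 2}. s u = 2}"
    using stair_vals[OF assms] by fastforce
  then show ?thesis using jpt_card[of s "d 1 + d 2"] assms
    by (simp add: is_staircase_def prod_eq_iff)
qed

lemma jpt_bound: assumes "is_staircase d s" "t \<le> d 1 + d 2"
  shows "fst (jpt s t) \<le> d 1 \<and> snd (jpt s t) \<le> d 2"
  using jpt_mono[OF assms(2), of s] jpt_N[OF assms(1)] by simp

lemma stair2_co: assumes "is_staircase d s" "t \<in> {1..d 1 + d 2}"
  shows "stair2 s t = co (jpt s t) (s t)"
proof (cases "s t = 1")
  case True then show ?thesis using jpt_card[of s t] by (simp add: stair2_def co_def)
next
  case False
  then have "s t = 2" using stair_vals[OF assms] by auto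
  moreover have "{u\<in>{1..t}. s u = 2} = {u\<in>{1..t}. s u \<noteq> 1}"
    using stair_vals[OF assms(1)] assms(2) by fastforce
  ultimately show ?thesis using jpt_card[of s t] by (simp add: stair2_def co_def)
qed

lemma tele: "(\<Sum>t\<in>{1..n}. g t - g (t - 1)) = (g n - g 0 :: real)" for n :: nat
  by (induction n) (auto simp: sum.cl_ivl_Suc)

definition supmod :: "(nat \<Rightarrow> nat) \<Rightarrow> (nat \<times> nat \<Rightarrow> real) \<Rightarrow> bool" where
  "supmod d ps \<longleftrightarrow>
    (\<forall>j1 j2 b'. j1 < d 1 \<longrightarrow> b' \<le> j2 \<longrightarrow> j2 \<le> d 2 \<longrightarrow>
        ps (j1+1, b') - ps (j1, b') \<le> ps (j1+1, j2) - ps (j1, j2)) \<and>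
    (\<forall>j1 j2 a'. j2 < d 2 \<longrightarrow> a' \<le> j1 \<longrightarrow> j1 \<le> d 1 \<longrightarrow>
        ps (a', j2+1) - ps (a', j2) \<le> ps (j1, j2+1) - ps (j1, j2))"

definition zind :: "nat \<Rightarrow> nat \<Rightarrow> nat \<Rightarrow> nat \<Rightarrow> real" where
  "zind a b i = (if i = 1 then ind a else ind b)"

definition mpt :: "(nat \<Rightarrow> nat) \<Rightarrow> nat \<Rightarrow> nat \<Rightarrow> nat \<Rightarrow> nat \<times> nat" where
  "mpt s a b t = (min (fst (jpt s t)) a, min (snd (jpt s t)) b)"

definition Eterm where
  "Eterm ps s a b t = (ps (jpt s t) - ps (jpt s (t - 1))) * zind a b (s t) (stair2 s t)
      - (ps (mpt s a b t) - ps (mpt s a b (t - 1)))"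

lemma rhs_decomp: assumes "is_staircase d s" "a \<le> d 1" "b \<le> d 2"
  shows "stair_rhs ps d s (zind a b) = ps (a, b) + (\<Sum>t\<in>{1..d 1 + d 2}. Eterm ps s a b t)"
proof -
  have m0: "mpt s a b 0 = (0,0)" by (simp add: mpt_def)
  have mN: "mpt s a b (d 1 + d 2) = (a, b)" using jpt_N[OF assms(1)] assms by (simp add: mpt_def)
  have "(\<Sum>t\<in>{1..d 1 + d 2}. Eterm ps s a b t) =
     (\<Sum>t\<in>{1..d 1 + d 2}. (ps (jpt s t) - ps (jpt s (t - 1))) * zind a b (s t) (stair2 s t))
     - (\<Sum>t\<in>{1..d 1 + d 2}. ps (mpt s a b t) - ps (mpt s a b (t - 1)))"
    unfolding Eterm_def by (rule sum_subtractf)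
  also have "(\<Sum>t\<in>{1..d 1 + d 2}. ps (mpt s a b t) - ps (mpt s a b (t - 1))) = ps (a,b) - ps (0,0)"
    using tele[of "\<lambda>t. ps (mpt s a b t)"] m0 mN by simp
  finally show ?thesis by (simp add: stair_rhs_def)
qed

lemma Eterm_info: assumes "is_staircase d s" "a \<le> d 1" "b \<le> d 2" "Suc u \<in> {1..d 1 + d 2}"
  shows "(s (Suc u) = 1 \<and> fst (jpt s u) < a \<and>
           Eterm ps s a b (Suc u) = (ps (fst (jpt s u) + 1, snd (jpt s u)) - ps (jpt s u))
             - (ps (fst (jpt s u) + 1, min (snd (jpt s u)) b) - ps (fst (jpt s u), min (snd (jpt s u)) b)))
       \<or> (s (Suc u) = 2 \<and> snd (jpt s u) < b \<and>
           Eterm ps s a b (Suc u) = (ps (fst (jpt s u), snd (jpt s u) + 1) - ps (jpt s u))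
             - (ps (min (fst (jpt s u)) a, snd (jpt s u) + 1) - ps (min (fst (jpt s u)) a, snd (jpt s u))))
       \<or> Eterm ps s a b (Suc u) = 0"
proof -
  obtain j1 j2 where j: "jpt s u = (j1, j2)" by (cases "jpt s u")
  have s2: "stair2 s (Suc u) = co (jpt s (Suc u)) (s (Suc u))" using stair2_co[OF assms(1,4)] .
  consider "s (Suc u) = 1" | "s (Suc u) = 2" using stair_vals[OF assms(1,4)] by auto
  then show ?thesis
  proof cases
    case 1
    have js: "jpt s (Suc u) = (j1 + 1, j2)" using j 1 by (simp add: prod_eq_iff jpt_Suc_fst jpt_Suc_snd)
    show ?thesis
    proof (cases "j1 < a")
      case True then show ?thesis using 1 js j s2
        by (simp add: Eterm_def mpt_def zind_def ind_def co_def)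
    next
      case False then show ?thesis using 1 js j s2
        by (simp add: Eterm_def mpt_def zind_def ind_def co_def min_def)
    qed
  next
    case 2
    have js: "jpt s (Suc u) = (j1, j2 + 1)" using j 2 by (simp add: prod_eq_iff jpt_Suc_fst jpt_Suc_snd)
    show ?thesis
    proof (cases "j2 < b")
      case True then show ?thesis using 2 js j s2
        by (simp add: Eterm_def mpt_def zind_def ind_def co_def)
    next
      case False then show ?thesis using 2 js j s2
        by (simp add: Eterm_def mpt_def zind_def ind_def co_def min_def)
    qed
  qed
qed

lemma supmod_ineq: assumes "is_staircase d s" "a \<le> d 1" "b \<le> d 2" "supmod d ps"
  shows "ps (a, b) \<le> stair_rhs ps d s (zind a b)"
proof -
  have "0 \<le> Eterm ps s a b t" if t: "t \<in> {1..d 1 + d 2}" for t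
  proof -
    obtain u where u: "t = Suc u" using t by (cases t) auto
    obtain j1 j2 where j: "jpt s u = (j1, j2)" by (cases "jpt s u")
    have bd: "j1 \<le> d 1 \<and> j2 \<le> d 2" using jpt_bound[OF assms(1), of u] t u j by simp
    have S1: "ps (j1+1, min j2 b) - ps (j1, min j2 b) \<le> ps (j1+1, j2) - ps (j1, j2)" if "j1 < a"
      using assms(4) unfolding supmod_def using that assms(2) bd by auto
    have S2: "ps (min j1 a, j2+1) - ps (min j1 a, j2) \<le> ps (j1, j2+1) - ps (j1, j2)" if "j2 < b"
      using assms(4) unfolding supmod_def using that assms(3) bd by auto
    show ?thesis using Eterm_info[OF assms(1,2,3), of u ps] t u S1 S2 j by auto

  qed
  then have "0 \<le> (\<Sum>t\<in>{1..d 1 + d 2}. Eterm ps s a b t)" by (intro sum_nonneg) blast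
  then show ?thesis unfolding rhs_decomp[OF assms(1,2,3)] by simp
qed

lemma stair_rhs_neg: "stair_rhs (\<lambda>c. - ps c) d s zz = - stair_rhs ps d s zz"
  by (simp add: stair_rhs_def sum_negf[symmetric] algebra_simps)

definition s0 :: "(nat \<Rightarrow> nat) \<Rightarrow> nat \<Rightarrow> nat \<Rightarrow> nat" where
  "s0 d a t = (if t \<le> a \<or> a + d 2 < t then 1 else 2)"

lemma jpt_s0: "jpt (s0 d a) t = (if t \<le> a then (t, 0) else if t \<le> a + d 2 then (a, t - a) else (t - d 2, d 2))"
proof (induction t)
  case 0 then show ?case by simp
next
  case (Suc t)
  show ?case
    unfolding prod_eq_iff jpt_Suc_fst jpt_Suc_snd s0_def[of d a "Suc t"] using Suc
    by (auto split: if_splits)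
qed

lemma s0_stair: assumes "a \<le> d 1" shows "is_staircase d (s0 d a)"
proof -
  have N: "jpt (s0 d a) (d 1 + d 2) = (d 1, d 2)" using assms by (auto simp: jpt_s0)
  have "{u\<in>{1..d 1 + d 2}. s0 d a u \<noteq> 1} = {u\<in>{1..d 1 + d 2}. s0 d a u = 2}"
    by (auto simp: s0_def)
  then show ?thesis using jpt_card[of "s0 d a" "d 1 + d 2"] N
    by (auto simp: is_staircase_def s0_def)
qed

lemma s0_eq: assumes "a \<le> d 1" "b \<le> d 2"
  shows "stair_rhs ps d (s0 d a) (zind a b) = ps (a, b)"
proof -
  have st: "is_staircase d (s0 d a)" using s0_stair[of a d, OF assms(1)] .
  have "Eterm ps (s0 d a) a b t = 0" if t: "t \<in> {1..d 1 + d 2}" for t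
  proof -
    obtain u where u: "t = Suc u" using t by (cases t) auto
    show ?thesis using Eterm_info[OF st assms, of u ps] t u
      by (auto simp: jpt_s0 s0_def split: if_splits)
  qed
  then show ?thesis unfolding rhs_decomp[OF st assms] by simp
qed



lemma Delta_mono: assumes "in_Delta d y" "1 \<le> j" "j \<le> k" "k \<le> d" shows "y k \<le> y j"
  using assms(3,4)
proof (induction k rule: dec_induct)
  case base then show ?case by simp
next
  case (step n)
  then have "y (n+1) \<le> y n" using assms(1,2) by (auto simp: in_Delta_def)
  with step show ?case by simp
qed

lemma Delta_01: assumes "in_Delta d y" "1 \<le> j" "j \<le> d" shows "0 \<le> y j \<and> y j \<le> 1"
  using Delta_mono[OF assms(1) assms(2) assms(3) order_refl] Delta_mono[OF assms(1) order_refl assms(2,3)]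
    assms by (auto simp: in_Delta_def)

definition VV :: "(nat \<Rightarrow> nat) \<Rightarrow> (nat \<Rightarrow> nat) \<Rightarrow> (nat \<Rightarrow> nat \<Rightarrow> real) \<Rightarrow> nat \<Rightarrow> real" where
  "VV d s zz t = (if t = 0 then 1 else if t \<le> d 1 + d 2 then zz (s t) (stair2 s t) else 0)"

definition sorted_st :: "(nat \<Rightarrow> nat) \<Rightarrow> (nat \<Rightarrow> nat) \<Rightarrow> (nat \<Rightarrow> nat \<Rightarrow> real) \<Rightarrow> bool" where
  "sorted_st d s zz \<longleftrightarrow> (\<forall>t\<in>{1..d 1 + d 2}. 0 \<le> zz (s t) (stair2 s t) \<and> zz (s t) (stair2 s t) \<le> 1) \<and>
      (\<forall>t. 1 \<le> t \<and> t < d 1 + d 2 \<longrightarrow> zz (s (t+1)) (stair2 s (t+1)) \<le> zz (s t) (stair2 s t))"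

lemma W_nonneg: assumes "sorted_st d s zz" "1 \<le> d 1 + d 2" "t \<le> d 1 + d 2"
  shows "0 \<le> VV d s zz t - VV d s zz (Suc t)"
proof -
  have m: "zz (s (t+1)) (stair2 s (t+1)) \<le> zz (s t) (stair2 s t)" if "1 \<le> t" "t < d 1 + d 2"
    using assms(1) that unfolding sorted_st_def by blast
  consider "t = 0" | "\<not> Suc t \<le> d 1 + d 2" "t \<noteq> 0" | "1 \<le> t" "Suc t \<le> d 1 + d 2" by linarith
  then show ?thesis
  proof cases
    case 1 then show ?thesis using assms unfolding sorted_st_def VV_def by auto
  next
    case 2 then show ?thesis using assms unfolding sorted_st_def VV_def by auto
  next
    case 3 then show ?thesis using m[OF 3(1)] unfolding VV_def by auto
  qed
qed

lemma W_sum: "(\<Sum>t\<in>{0..d 1 + d 2}. VV d s zz t - VV d s zz (Suc t)) = 1"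
proof -
  have "(\<Sum>t\<in>{0..d 1 + d 2}. VV d s zz t - VV d s zz (Suc t))
      = - (\<Sum>t=0..d 1 + d 2. VV d s zz (Suc t) - VV d s zz t)"
    by (simp add: sum_negf[symmetric])
  also have "\<dots> = 1" by (subst sum_Suc_diff) (auto simp: VV_def)
  finally show ?thesis .
qed

lemma abel: "(\<Sum>t=0..n. (v t - v (Suc t)) * g t) =
   v 0 * g 0 - v (Suc n) * g n + (\<Sum>t\<in>{1..n}. (g t - g (t - 1)) * v t)" for v g :: "nat \<Rightarrow> real"
  by (induction n) (auto simp: sum.cl_ivl_Suc algebra_simps)

lemma decomp_mu: "(\<Sum>t\<in>{0..d 1 + d 2}. (VV d s zz t - VV d s zz (Suc t)) * ps (jpt s t)) = stair_rhs ps d s zz"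
proof -
  have "(\<Sum>t\<in>{0..d 1 + d 2}. (VV d s zz t - VV d s zz (Suc t)) * ps (jpt s t)) =
     ps (jpt s 0) + (\<Sum>t\<in>{1..d 1 + d 2}. (ps (jpt s t) - ps (jpt s (t - 1))) * VV d s zz t)"
    by (subst abel) (simp add: VV_def)
  also have "\<dots> = stair_rhs ps d s zz"
    unfolding stair_rhs_def by (intro arg_cong2[where f="(+)"] refl sum.cong) (auto simp: VV_def)
  finally show ?thesis .
qed

lemma co_Suc: assumes "is_staircase d s" "Suc t \<le> d 1 + d 2" "i \<in> {1,2}"
  shows "co (jpt s (Suc t)) i = co (jpt s t) i + (if s (Suc t) = i then 1 else 0)"
  using stair_vals[OF assms(1), of "Suc t"] assms(2,3)
  by (auto simp: co_def jpt_Suc_fst jpt_Suc_snd)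

lemma co_mono: "t \<le> t' \<Longrightarrow> co (jpt s t) i \<le> co (jpt s t') i"
  using jpt_mono[of t t' s] by (auto simp: co_def)

lemma decomp_z: assumes st: "is_staircase d s" and i: "i \<in> {1,2}" and k: "k \<in> {1..d i}"
  shows "(\<Sum>t\<in>{0..d 1 + d 2}. (VV d s zz t - VV d s zz (Suc t)) * ind (co (jpt s t) i) k) = zz i k"
proof -
  define N where "N = d 1 + d 2"
  define g where "g t = co (jpt s t) i" for t
  have gN: "g N = d i" using jpt_N[OF st] i by (auto simp: g_def co_def N_def)
  have ex: "k \<le> g N" using gN k by simp
  define T where "T = (LEAST t. k \<le> g t)"
  have TN: "T \<le> N" unfolding T_def using ex by (rule Least_le)
  have kT: "k \<le> g T" unfolding T_def using ex by (rule LeastI)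
  have T0: "T \<noteq> 0"
  proof
    assume "T = 0" then show False using kT k by (auto simp: g_def co_def split: if_splits)
  qed
  then obtain u where u: "T = Suc u" by (cases T) auto
  have gu: "g u < k" using not_less_Least[of u "\<lambda>t. k \<le> g t"] u unfolding T_def[symmetric] by auto
  have step: "g T = g u + (if s T = i then 1 else 0)" using co_Suc[OF st, of u i] TN u i
    by (simp add: g_def N_def)
  have sT: "s T = i" and gT: "g T = k" using step gu kT by (auto split: if_splits)
  have TN1: "T \<in> {1..d 1 + d 2}" using TN T0 by (auto simp: N_def)
  have VT: "VV d s zz T = zz i k"
    using stair2_co[OF st TN1] sT gT TN T0 by (simp add: VV_def g_def N_def)
  have iff: "k \<le> g t \<longleftrightarrow> T \<le> t" for t
  proof
    assume "k \<le> g t" then show "T \<le> t" unfolding T_def by (rule Least_le)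
  next
    assume "T \<le> t" then show "k \<le> g t" using kT co_mono[of T t s i] by (simp add: g_def)
  qed
  have "(\<Sum>t\<in>{0..N}. (VV d s zz t - VV d s zz (Suc t)) * ind (g t) k)
      = (\<Sum>t\<in>{0..N}. if T \<le> t then VV d s zz t - VV d s zz (Suc t) else 0)"
    by (intro sum.cong) (auto simp: ind_def iff)
  also have "\<dots> = (\<Sum>t\<in>{T..N}. VV d s zz t - VV d s zz (Suc t))"
    by (rule sum.mono_neutral_cong_right) auto
  also have "\<dots> = - (\<Sum>t=T..N. VV d s zz (Suc t) - VV d s zz t)"
    by (simp add: sum_negf[symmetric])
  also have "\<dots> = VV d s zz T" using TN by (subst sum_Suc_diff) (auto simp: VV_def N_def)
  finally show ?thesis using VT by (simp add: g_def N_def)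
qed



definition ch :: "(nat \<Rightarrow> nat) \<Rightarrow> (nat \<Rightarrow> nat \<Rightarrow> real) \<Rightarrow> nat \<times> nat \<Rightarrow> bool" where
  "ch d zz c \<longleftrightarrow> d 2 \<le> snd c \<or> (fst c < d 1 \<and> zz 2 (snd c + 1) \<le> zz 1 (fst c + 1))"

fun stt :: "(nat \<Rightarrow> nat) \<Rightarrow> (nat \<Rightarrow> nat \<Rightarrow> real) \<Rightarrow> nat \<Rightarrow> nat \<times> nat" where
  "stt d zz 0 = (0, 0)"
| "stt d zz (Suc t) = (if ch d zz (stt d zz t) then (fst (stt d zz t) + 1, snd (stt d zz t))
                       else (fst (stt d zz t), snd (stt d zz t) + 1))"

definition sst :: "(nat \<Rightarrow> nat) \<Rightarrow> (nat \<Rightarrow> nat \<Rightarrow> real) \<Rightarrow> nat \<Rightarrow> nat" where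
  "sst d zz t = (if ch d zz (stt d zz (t - 1)) then 1 else 2)"

lemma jpt_sst: "jpt (sst d zz) t = stt d zz t"
proof (induction t)
  case 0 then show ?case by simp
next
  case (Suc t) then show ?case
    unfolding prod_eq_iff jpt_Suc_fst jpt_Suc_snd by (simp add: sst_def)
qed

lemma stt_inv: "t \<le> d 1 + d 2 \<Longrightarrow> fst (stt d zz t) + snd (stt d zz t) = t \<and> fst (stt d zz t) \<le> d 1 \<and> snd (stt d zz t) \<le> d 2"
proof (induction t)
  case 0 then show ?case by simp
next
  case (Suc t)
  then have IH: "fst (stt d zz t) + snd (stt d zz t) = t \<and> fst (stt d zz t) \<le> d 1 \<and> snd (stt d zz t) \<le> d 2" by simp
  show ?case using IH Suc.prems by (auto simp: ch_def)
qed

lemma stt_valid: assumes "Suc t \<le> d 1 + d 2"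
  shows "(ch d zz (stt d zz t) \<longrightarrow> fst (stt d zz t) < d 1) \<and> (\<not> ch d zz (stt d zz t) \<longrightarrow> snd (stt d zz t) < d 2)"
  using stt_inv[OF assms, of zz] by (auto split: if_splits)

lemma sst_stair: "is_staircase d (sst d zz)"
proof -
  have N: "jpt (sst d zz) (d 1 + d 2) = (d 1, d 2)"
    using stt_inv[of "d 1 + d 2" d zz] by (simp add: jpt_sst prod_eq_iff)
  have "{u\<in>{1..d 1 + d 2}. sst d zz u \<noteq> 1} = {u\<in>{1..d 1 + d 2}. sst d zz u = 2}"
    by (auto simp: sst_def)
  then show ?thesis using jpt_card[of "sst d zz" "d 1 + d 2"] N
    by (auto simp: is_staircase_def sst_def)
qed

lemma sst_val: assumes "t \<in> {1..d 1 + d 2}"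
  shows "zz (sst d zz t) (stair2 (sst d zz) t) =
     (if ch d zz (stt d zz (t - 1)) then zz 1 (fst (stt d zz (t - 1)) + 1) else zz 2 (snd (stt d zz (t - 1)) + 1))"
proof -
  obtain u where u: "t = Suc u" using assms by (cases t) auto
  show ?thesis using stair2_co[OF sst_stair assms] u
    by (simp add: co_def jpt_sst sst_def)
qed

lemma sst_sorted: assumes D1: "in_Delta (d 1) (zz 1)" and D2: "in_Delta (d 2) (zz 2)"
  shows "sorted_st d (sst d zz) zz"
proof -
  let ?c = "\<lambda>t. stt d zz t"
  have b01: "0 \<le> zz (sst d zz t) (stair2 (sst d zz) t) \<and> zz (sst d zz t) (stair2 (sst d zz) t) \<le> 1"
    if t: "t \<in> {1..d 1 + d 2}" for t
  proof -
    obtain u where u: "t = Suc u" using t by (cases t) auto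
    have v: "(ch d zz (?c u) \<longrightarrow> fst (?c u) < d 1) \<and> (\<not> ch d zz (?c u) \<longrightarrow> snd (?c u) < d 2)"
      using stt_valid[of u d zz] t u by simp
    have e1: "zz (sst d zz t) (stair2 (sst d zz) t) =
     (if ch d zz (?c u) then zz 1 (fst (?c u) + 1) else zz 2 (snd (?c u) + 1))"
      using sst_val[of t d zz] t u by simp
    show ?thesis unfolding e1 using v Delta_01[OF D1] Delta_01[OF D2] by auto
  qed
  have mono: "zz (sst d zz (t+1)) (stair2 (sst d zz) (t+1)) \<le> zz (sst d zz t) (stair2 (sst d zz) t)"
    if t: "1 \<le> t" "t < d 1 + d 2" for t
  proof -
    obtain u where u: "t = Suc u" using t by (cases t) auto
    have v1: "(ch d zz (?c u) \<longrightarrow> fst (?c u) < d 1) \<and> (\<not> ch d zz (?c u) \<longrightarrow> snd (?c u) < d 2)"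
      using stt_valid[of u d zz] t u by simp
    have v2: "(ch d zz (?c (Suc u)) \<longrightarrow> fst (?c (Suc u)) < d 1) \<and> (\<not> ch d zz (?c (Suc u)) \<longrightarrow> snd (?c (Suc u)) < d 2)"
      using stt_valid[of "Suc u" d zz] t u by simp
    have e1: "zz (sst d zz t) (stair2 (sst d zz) t) =
     (if ch d zz (?c u) then zz 1 (fst (?c u) + 1) else zz 2 (snd (?c u) + 1))"
      using sst_val[of t d zz] t u by simp
    have e2: "zz (sst d zz (t+1)) (stair2 (sst d zz) (t+1)) =
     (if ch d zz (?c (Suc u)) then zz 1 (fst (?c (Suc u)) + 1) else zz 2 (snd (?c (Suc u)) + 1))"
      using sst_val[of "t+1" d zz] t u by simp
    obtain a b where ab: "?c u = (a, b)" by (cases "?c u")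
    show ?thesis
    proof (cases "ch d zz (a, b)")
      case True
      then have cs: "?c (Suc u) = (a + 1, b)" using ab by simp
      show ?thesis
      proof (cases "ch d zz (a + 1, b)")
        case True2: True
        then show ?thesis using e1 e2 cs ab True v2 Delta_mono[OF D1, of "a+1" "a+2"] by simp
      next
        case False2: False
        then have "b < d 2" using v2 cs by simp
        then show ?thesis using e1 e2 cs ab True False2 by (auto simp: ch_def)
      qed
    next
      case False
      then have cs: "?c (Suc u) = (a, b + 1)" using ab by simp
      show ?thesis
      proof (cases "ch d zz (a, b + 1)")
        case True2: True
        then have "a < d 1" using v2 cs by simp
        then show ?thesis using e1 e2 cs ab False True2 by (auto simp: ch_def)
      next
        case False2: False
        then show ?thesis using e1 e2 cs ab False v2 Delta_mono[OF D2, of "b+1" "b+2"] by simp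
      qed
    qed
  qed
  show ?thesis unfolding sorted_st_def using b01 mono by blast
qed

lemma sorted_exists: assumes "in_Delta (d 1) (zz 1)" "in_Delta (d 2) (zz 2)"
  shows "\<exists>s. is_staircase d s \<and> sorted_st d s zz"
  using sst_stair sst_sorted[OF assms] by blast



lemma chain_mono: fixes g :: "nat \<Rightarrow> real" assumes "\<forall>k. k < n \<longrightarrow> g k \<le> (g (k+1) :: real)" "i \<le> j" "j \<le> n" shows "g i \<le> g j"
  using assms(2,3)
proof (induction j rule: dec_induct)
  case base then show ?case by simp
next
  case (step m) then show ?case using assms(1) by (metis Suc_eq_plus1 Suc_leD Suc_le_lessD order_trans)
qed

lemma p_tel: assumes "a \<le> d" shows "p a = p 0 + (\<Sum>j\<in>{1..d}. (p j - p (j - 1)) * ind a j :: real)"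
proof -
  have "(\<Sum>j\<in>{1..d}. (p j - p (j - 1)) * ind a j) = (\<Sum>j\<in>{1..a}. p j - p (j - 1))"
    using assms by (intro sum.mono_neutral_cong_right) (auto simp: ind_def)
  also have "\<dots> = p a - p 0" by (rule tele)
  finally show ?thesis by simp
qed

lemma Delta_cong: assumes "in_Delta d y" "\<forall>j\<in>{1..d}. y j = y' j" "1 \<le> d" shows "in_Delta d y'"
  using assms unfolding in_Delta_def by (metis atLeastAtMost_iff le_add2 le_refl less_imp_le_nat Suc_eq_plus1 Suc_leI)

lemma Delta_ind: "in_Delta d (\<lambda>j. if j \<in> {1..d} then ind a j else 0)"
  by (auto simp: in_Delta_def ind_def)

lemma bin_delta: assumes D: "in_Delta d y" and "1 \<le> d" and B: "\<forall>j\<in>{1..d}. y j \<in> {0,1}"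
  shows "\<exists>a\<le>d. \<forall>j\<in>{1..d}. y j = ind a j"
proof (cases "\<exists>j\<in>{1..d}. y j = 0")
  case False
  then show ?thesis using B by (intro exI[of _ d]) (auto simp: ind_def)
next
  case True
  define m where "m = (LEAST j. j \<in> {1..d} \<and> y j = 0)"
  have m: "m \<in> {1..d} \<and> y m = 0" unfolding m_def using True by (metis (mono_tags, lifting) LeastI)
  show ?thesis
  proof (intro exI[of _ "m - 1"] conjI ballI)
    show "m - 1 \<le> d" using m by auto
    fix j assume j: "j \<in> {1..d}"
    show "y j = ind (m - 1) j"
    proof (cases "j < m")
      case True
      then have "y j \<noteq> 0" using not_less_Least[of j "\<lambda>j. j \<in> {1..d} \<and> y j = 0"] j unfolding m_def[symmetric] by auto
      then show ?thesis using B j True by (auto simp: ind_def)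
    next
      case False
      then have "y j \<le> y m" using Delta_mono[OF D, of m j] m j by auto
      then have "y j = 0" using m B j by auto
      then show ?thesis using False m by (auto simp: ind_def)
    qed
  qed
qed

lemma stair2_range: assumes "is_staircase d s" "t \<in> {1..d 1 + d 2}"
  shows "s t \<in> {1,2} \<and> stair2 s t \<in> {1..d (s t)}"
proof -
  obtain u where u: "t = Suc u" using assms(2) by (cases t) auto
  have sv: "s t \<in> {1,2}" using stair_vals[OF assms] by auto
  have "co (jpt s t) (s t) = co (jpt s u) (s t) + 1" using co_Suc[OF assms(1), of u "s t"] u sv assms(2) by simp
  moreover have "co (jpt s t) (s t) \<le> d (s t)" using jpt_bound[OF assms(1), of t] assms(2) sv by (auto simp: co_def)
  ultimately show ?thesis using sv stair2_co[OF assms] by auto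
qed

lemma stair_rhs_cong: assumes "is_staircase d s" "\<forall>i\<in>{1,2}. \<forall>j\<in>{1..d i}. zz i j = zz' i j"
  shows "stair_rhs ps d s zz = stair_rhs ps d s zz'"
  unfolding stair_rhs_def using stair2_range[OF assms(1)] assms(2)
  by (intro arg_cong2[where f="(+)"] refl sum.cong) (metis)

lemma comb_same: "comb t a a = a"
  by (simp add: comb_def algebra_simps)
lemma comb_1: "comb 1 a b = a" by (simp add: comb_def)
lemma comb_0: "comb 0 a b = b" by (simp add: comb_def)

definition psum :: "nat set \<Rightarrow> (nat \<Rightarrow> real) \<Rightarrow> (nat \<Rightarrow> point) \<Rightarrow> point" where
  "psum A w b = ((\<lambda>i. \<Sum>t\<in>A. w t * fst (b t) i), (\<lambda>i j. \<Sum>t\<in>A. w t * fst (snd (b t)) i j),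
                 \<Sum>t\<in>A. w t * snd (snd (b t)))"

lemma sum_insert_split: assumes "finite A" "k \<notin> A" "w k \<noteq> 1"
  shows "(\<Sum>t\<in>insert k A. w t * g t) = w k * g k + (1 - w k) * (\<Sum>t\<in>A. (w t / (1 - w k)) * (g t :: real))"
proof -
  have "(1 - w k) * (\<Sum>t\<in>A. (w t / (1 - w k)) * g t) = (\<Sum>t\<in>A. w t * g t)"
    unfolding sum_distrib_left using assms(3) by (intro sum.cong) auto
  then show ?thesis using assms by simp
qed

lemma psum_insert: assumes "finite A" "k \<notin> A" "w k \<noteq> 1"
  shows "psum (insert k A) w b = comb (w k) (b k) (psum A (\<lambda>t. w t / (1 - w k)) b)"
  unfolding psum_def comb_def using sum_insert_split[of A k w, OF assms] by (simp add: fun_eq_iff)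

lemma psum_one: assumes "finite A" "k \<notin> A" "w k = 1" "\<forall>t\<in>insert k A. 0 \<le> w t" "sum w (insert k A) = 1"
  shows "psum (insert k A) w b = b k"
proof -
  have "sum w A = 0" using assms by simp
  then have z: "\<forall>t\<in>A. w t = 0" using assms(1,4) sum_nonneg_eq_0_iff by blast
  then show ?thesis using assms by (simp add: psum_def)
qed

lemma psum_in: assumes conv: "\<forall>a\<in>Q. \<forall>b\<in>Q. \<forall>\<theta>. 0 \<le> \<theta> \<and> \<theta> \<le> 1 \<longrightarrow> comb \<theta> a b \<in> Q"
  shows "finite A \<Longrightarrow> (\<forall>t\<in>A. 0 \<le> w t) \<Longrightarrow> sum w A = 1 \<Longrightarrow> (\<forall>t\<in>A. b t \<in> Q) \<Longrightarrow> psum A w b \<in> Q"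
proof (induction A arbitrary: w rule: finite_induct)
  case empty then show ?case by simp
next
  case (insert k A)
  show ?case
  proof (cases "w k = 1")
    case True then show ?thesis using psum_one[of A k w, OF insert(1,2) True] insert.prems by simp
  next
    case False
    have wk: "w k \<le> 1" using insert.prems insert(1,2) sum_nonneg[of A w] by auto
    then have wk1: "w k < 1" using False by simp
    have "psum A (\<lambda>t. w t / (1 - w k)) b \<in> Q"
    proof (rule insert.IH)
      show "\<forall>t\<in>A. 0 \<le> w t / (1 - w k)" using insert.prems wk1 by auto
      have "sum w A = 1 - w k" using insert.prems insert(1,2) by simp
      then show "(\<Sum>t\<in>A. w t / (1 - w k)) = 1" using wk1 by (simp add: sum_divide_distrib[symmetric])
      show "\<forall>t\<in>A. b t \<in> Q" using insert.prems by auto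
    qed
    then show ?thesis unfolding psum_insert[of A k w, OF insert(1,2) False]
      using conv insert.prems wk by auto
  qed
qed

lemma vertex_psum: assumes conv: "\<forall>a\<in>Q. \<forall>b\<in>Q. \<forall>\<theta>. 0 \<le> \<theta> \<and> \<theta> \<le> 1 \<longrightarrow> comb \<theta> a b \<in> Q"
    and vx: "is_vertex v Q"
  shows "finite A \<Longrightarrow> (\<forall>t\<in>A. 0 \<le> w t) \<Longrightarrow> sum w A = 1 \<Longrightarrow> (\<forall>t\<in>A. b t \<in> Q) \<Longrightarrow> v = psum A w b
     \<Longrightarrow> \<exists>t\<in>A. v = b t"
proof (induction A arbitrary: w rule: finite_induct)
  case empty then show ?case by simp
next
  case (insert k A)
  show ?case
  proof (cases "w k = 1")
    case True then show ?thesis using psum_one[of A k w, OF insert(1,2) True] insert.prems by simp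
  next
    case False
    have wk: "w k \<le> 1" using insert.prems insert(1,2) sum_nonneg[of A w] by auto
    then have wk1: "w k < 1" using False by simp
    define w' where "w' = (\<lambda>t. w t / (1 - w k))"
    have w'p: "\<forall>t\<in>A. 0 \<le> w' t" "sum w' A = 1"
      using insert.prems insert(1,2) wk1 by (auto simp: w'_def sum_divide_distrib[symmetric])
    have inQ: "psum A w' b \<in> Q"
      using psum_in[OF conv insert(1) w'p] insert.prems by auto
    have v: "v = comb (w k) (b k) (psum A w' b)"
      using insert.prems(4) psum_insert[of A k w, OF insert(1,2) False] by (simp add: w'_def)
    show ?thesis
    proof (cases "w k = 0")
      case True
      then have "v = psum A w' b" using v comb_0 by simp
      then show ?thesis using insert.IH[OF w'p] insert.prems by auto
    next
      case False
      then have "0 < w k" using insert.prems by auto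
      then have "b k = psum A w' b" using vx v wk1 inQ insert.prems unfolding is_vertex_def by auto
      then show ?thesis using v comb_same by auto
    qed
  qed
qed



lemma supmod_prod: assumes A: "\<forall>i j. i \<le> j \<longrightarrow> j \<le> d 1 \<longrightarrow> A i \<le> (A j :: real)"
  and B: "\<forall>i j. i \<le> j \<longrightarrow> j \<le> d 2 \<longrightarrow> B i \<le> (B j :: real)"
  shows "supmod d (\<lambda>c. A (fst c) * B (snd c))"
  unfolding supmod_def
proof (intro conjI allI impI)
  fix j1 j2 b' assume h: "j1 < d 1" "b' \<le> j2" "j2 \<le> d 2"
  have "0 \<le> (A (j1+1) - A j1) * (B j2 - B b')" using A B h by (intro mult_nonneg_nonneg) auto
  moreover have "A (j1+1) * B j2 - A j1 * B j2 - (A (j1+1) * B b' - A j1 * B b') = (A (j1+1) - A j1) * (B j2 - B b')"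
    by (simp add: algebra_simps)
  ultimately show "A (fst (j1 + 1, b')) * B (snd (j1 + 1, b')) - A (fst (j1, b')) * B (snd (j1, b'))
       \<le> A (fst (j1 + 1, j2)) * B (snd (j1 + 1, j2)) - A (fst (j1, j2)) * B (snd (j1, j2))" by simp
next
  fix j1 j2 a' assume h: "j2 < d 2" "a' \<le> j1" "j1 \<le> d 1"
  have "0 \<le> (B (j2+1) - B j2) * (A j1 - A a')" using A B h by (intro mult_nonneg_nonneg) auto
  moreover have "A j1 * B (j2+1) - A j1 * B j2 - (A a' * B (j2+1) - A a' * B j2) = (B (j2+1) - B j2) * (A j1 - A a')"
    by (simp add: algebra_simps)
  ultimately show "A (fst (a', j2 + 1)) * B (snd (a', j2 + 1)) - A (fst (a', j2)) * B (snd (a', j2))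
       \<le> A (fst (j1, j2 + 1)) * B (snd (j1, j2 + 1)) - A (fst (j1, j2)) * B (snd (j1, j2))" by simp
qed

lemma supmod_prod2: assumes A: "\<forall>i j. i \<le> j \<longrightarrow> j \<le> d 1 \<longrightarrow> A i \<le> (A j :: real)"
  and B: "\<forall>i j. i \<le> j \<longrightarrow> j \<le> d 2 \<longrightarrow> B j \<le> (B i :: real)"
  shows "supmod d (\<lambda>c. - (A (fst c) * B (snd c)))"
proof -
  have "supmod d (\<lambda>c. A (fst c) * (- B (snd c)))"
    by (rule supmod_prod) (use A B in auto)
  then show ?thesis by simp
qed

definition binQ :: "(nat \<Rightarrow> nat) \<Rightarrow> (nat \<Rightarrow> nat \<Rightarrow> real) \<Rightarrow> (nat \<Rightarrow> real \<Rightarrow> real) \<Rightarrow> nat \<Rightarrow> nat \<Rightarrow> point" where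
  "binQ d p f a1 a2 = ((\<lambda>i. if i = 1 then p 1 a1 else if i = 2 then p 2 a2 else 0),
     (\<lambda>i j. if i = 1 \<and> j \<in> {1..d 1} then ind a1 j else if i = 2 \<and> j \<in> {1..d 2} then ind a2 j else 0),
     f 1 (p 1 a1) * f 2 (p 2 a2))"

lemma inB_ind: assumes "a \<le> d" shows "in_B d q (q a) (\<lambda>j. if j \<in> {1..d} then ind a j else 0)"
proof -
  have "q a = q 0 + (\<Sum>j\<in>{1..d}. (q j - q (j - 1)) * ind a j)" by (rule p_tel[OF assms])
  also have "\<dots> = q 0 + (\<Sum>j\<in>{1..d}. (q j - q (j - 1)) * (if j \<in> {1..d} then ind a j else 0))"
    by (intro arg_cong2[where f="(+)"] refl sum.cong) auto
  finally show ?thesis unfolding in_B_def using Delta_ind by blast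
qed

lemma recover: assumes "\<rho> permutes {0..d}" "a \<le> d" "\<forall>j\<in>{1..d}. y j = ind a j" "\<forall>j\<in>{1..d}. y j = Lmap d \<rho> y' j"
  shows "\<forall>j\<in>{1..d}. y' j = ind (inv \<rho> a) j"
proof
  fix j assume j: "j \<in> {1..d}"
  have "y' j = Lmap d (inv \<rho>) (Lmap d \<rho> y') j" using Lmap_inv[OF assms(1) j] by simp
  also have "Lmap d (inv \<rho>) (Lmap d \<rho> y') = Lmap d (inv \<rho>) y" using assms(4) by (intro Lmap_cong) auto
  also have "\<dots> = Lmap d (inv \<rho>) (ind a)" using assms(3) by (intro Lmap_cong) auto
  also have "\<dots> j = ind (inv \<rho> a) j" by (rule Lmap_ind[OF permutes_inv[OF assms(1)] assms(2)])
  finally show "y' j = ind (inv \<rho> a) j" .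
qed

locale setting =
  fixes d :: "nat \<Rightarrow> nat" and p :: "nat \<Rightarrow> nat \<Rightarrow> real" and f :: "nat \<Rightarrow> real \<Rightarrow> real"
    and \<sigma> \<tau> :: "nat \<Rightarrow> nat \<Rightarrow> nat"
  assumes d_pos: "\<forall>i\<in>{1,2}. d i \<ge> 1"
    and p_incr: "\<forall>i\<in>{1,2}. \<forall>j. j < d i \<longrightarrow> p i j < p i (j + 1)"
    and \<sigma>_perm: "\<forall>i\<in>{1,2}. \<sigma> i permutes {0..d i}"
    and \<tau>_perm: "\<forall>i\<in>{1,2}. \<tau> i permutes {0..d i}"
    and \<sigma>_sorted: "\<forall>i\<in>{1,2}. \<forall>k. k < d i \<longrightarrow>
                    f i (p i (\<sigma> i k)) \<le> f i (p i (\<sigma> i (k + 1)))"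
    and \<tau>1_sorted: "\<forall>k. k < d 1 \<longrightarrow> f 1 (p 1 (\<tau> 1 k)) \<le> f 1 (p 1 (\<tau> 1 (k + 1)))"
    and \<tau>2_sorted: "\<forall>k. k < d 2 \<longrightarrow> f 2 (p 2 (\<tau> 2 k)) \<ge> f 2 (p 2 (\<tau> 2 (k + 1)))"
begin

lemma d1: "1 \<le> d 1" and d2: "1 \<le> d 2" using d_pos by auto
lemma sp1: "\<sigma> 1 permutes {0..d 1}" and sp2: "\<sigma> 2 permutes {0..d 2}"
  and tp1: "\<tau> 1 permutes {0..d 1}" and tp2: "\<tau> 2 permutes {0..d 2}" using \<sigma>_perm \<tau>_perm by auto

lemma psi_eq: "psi f p \<rho> = (\<lambda>c. f 1 (p 1 (\<rho> 1 (fst c))) * f 2 (p 2 (\<rho> 2 (snd c))))"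
  by (simp add: psi_def fun_eq_iff)

lemma supmod_\<sigma>: "supmod d (psi f p \<sigma>)"
  unfolding psi_eq
proof (rule supmod_prod)
  show "\<forall>i j. i \<le> j \<longrightarrow> j \<le> d 1 \<longrightarrow> f 1 (p 1 (\<sigma> 1 i)) \<le> f 1 (p 1 (\<sigma> 1 j))"
    using chain_mono[of "d 1" "\<lambda>k. f 1 (p 1 (\<sigma> 1 k))"] \<sigma>_sorted by auto
  show "\<forall>i j. i \<le> j \<longrightarrow> j \<le> d 2 \<longrightarrow> f 2 (p 2 (\<sigma> 2 i)) \<le> f 2 (p 2 (\<sigma> 2 j))"
    using chain_mono[of "d 2" "\<lambda>k. f 2 (p 2 (\<sigma> 2 k))"] \<sigma>_sorted by auto
qed

lemma supmod_\<tau>: "supmod d (\<lambda>c. - psi f p \<tau> c)"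
  unfolding psi_eq
proof (rule supmod_prod2)
  show "\<forall>i j. i \<le> j \<longrightarrow> j \<le> d 1 \<longrightarrow> f 1 (p 1 (\<tau> 1 i)) \<le> f 1 (p 1 (\<tau> 1 j))"
    using chain_mono[of "d 1" "\<lambda>k. f 1 (p 1 (\<tau> 1 k))"] \<tau>1_sorted by auto
  show "\<forall>i j. i \<le> j \<longrightarrow> j \<le> d 2 \<longrightarrow> f 2 (p 2 (\<tau> 2 j)) \<le> f 2 (p 2 (\<tau> 2 i))"
    using chain_mono[of "d 2" "\<lambda>k. - f 2 (p 2 (\<tau> 2 k))"] \<tau>2_sorted by auto
qed

lemma inv_facts: fixes a n :: nat assumes "\<rho> permutes {0..n}" "a \<le> n" shows "inv \<rho> a \<le> n" "\<rho> (inv \<rho> a) = a"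
  using permutes_in_image[OF permutes_inv[OF assms(1)], of a] assms(2) permutes_inverses[OF assms(1)] by auto

lemma rhs_upper: assumes "a1 \<le> d 1" "a2 \<le> d 2" "is_staircase d s"
  shows "f 1 (p 1 a1) * f 2 (p 2 a2) \<le> stair_rhs (psi f p \<sigma>) d s (zind (inv (\<sigma> 1) a1) (inv (\<sigma> 2) a2))"
  using supmod_ineq[OF assms(3) _ _ supmod_\<sigma>, of "inv (\<sigma> 1) a1" "inv (\<sigma> 2) a2"]
    inv_facts[OF sp1 assms(1)] inv_facts[OF sp2 assms(2)] by (simp add: psi_def)

lemma rhs_lower: assumes "a1 \<le> d 1" "a2 \<le> d 2" "is_staircase d s"
  shows "stair_rhs (psi f p \<tau>) d s (zind (inv (\<tau> 1) a1) (inv (\<tau> 2) a2)) \<le> f 1 (p 1 a1) * f 2 (p 2 a2)"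
  using supmod_ineq[OF assms(3) _ _ supmod_\<tau>, of "inv (\<tau> 1) a1" "inv (\<tau> 2) a2"]
    inv_facts[OF tp1 assms(1)] inv_facts[OF tp2 assms(2)] by (simp add: psi_eq stair_rhs_neg)

end


context setting
begin

lemma binQ_in: assumes a: "a1 \<le> d 1" "a2 \<le> d 2" shows "binQ d p f a1 a2 \<in> Qset d p f \<sigma> \<tau>"
proof -
  define b1 b2 c1 c2 where "b1 = inv (\<sigma> 1) a1" and "b2 = inv (\<sigma> 2) a2" and "c1 = inv (\<tau> 1) a1" and "c2 = inv (\<tau> 2) a2"
  note i1 = inv_facts[OF sp1 a(1), folded b1_def] and i2 = inv_facts[OF sp2 a(2), folded b2_def]
   and i3 = inv_facts[OF tp1 a(1), folded c1_def] and i4 = inv_facts[OF tp2 a(2), folded c2_def]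
  have B1: "in_B (d 1) (p 1) (p 1 a1) (\<lambda>j. if j \<in> {1..d 1} then ind a1 j else 0)" using inB_ind[OF a(1)] .
  have B2: "in_B (d 2) (p 2) (p 2 a2) (\<lambda>j. if j \<in> {1..d 2} then ind a2 j else 0)" using inB_ind[OF a(2)] .
  have L1: "\<forall>j. ind a1 j = Lmap (d 1) (\<sigma> 1) (zind b1 b2 1) j" using Lmap_ind[OF sp1 i1(1)] i1 by (simp add: zind_def)
  have L2: "\<forall>j. ind a2 j = Lmap (d 2) (\<sigma> 2) (zind b1 b2 2) j" using Lmap_ind[OF sp2 i2(1)] i2 by (simp add: zind_def)
  have L3: "\<forall>j. ind a1 j = Lmap (d 1) (\<tau> 1) (zind c1 c2 1) j" using Lmap_ind[OF tp1 i3(1)] i3 by (simp add: zind_def)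
  have L4: "\<forall>j. ind a2 j = Lmap (d 2) (\<tau> 2) (zind c1 c2 2) j" using Lmap_ind[OF tp2 i4(1)] i4 by (simp add: zind_def)
  have U: "\<forall>s. is_staircase d s \<longrightarrow> f 1 (p 1 a1) * f 2 (p 2 a2) \<le> stair_rhs (psi f p \<sigma>) d s (zind b1 b2)"
    using rhs_upper[OF a] unfolding b1_def b2_def by blast
  have Lo: "\<forall>s. is_staircase d s \<longrightarrow> stair_rhs (psi f p \<tau>) d s (zind c1 c2) \<le> f 1 (p 1 a1) * f 2 (p 2 a2)"
    using rhs_lower[OF a] unfolding c1_def c2_def by blast
  show ?thesis unfolding binQ_def Qset_def mem_Collect_eq prod.case
    apply (intro conjI)
    subgoal by auto
    subgoal by auto
    subgoal using B1 B2 by (simp cong: if_cong)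
    apply (rule exI[of _ "zind b1 b2"], rule exI[of _ "zind c1 c2"])
    using L1 L2 L3 L4 U Lo by auto
qed

lemma binQ_binary: "binary_z d (binQ d p f a1 a2)"
  by (auto simp: binary_z_def binQ_def ind_def)

lemma binQ_S: assumes "a1 \<le> d 1" "a2 \<le> d 2" shows "proj_xmu (binQ d p f a1 a2) \<in> Sset d p f"
  using assms by (auto simp: proj_xmu_def binQ_def Sset_def)

lemma S_binQ: assumes "(x, \<mu>) \<in> Sset d p f"
  shows "\<exists>a1 a2. a1 \<le> d 1 \<and> a2 \<le> d 2 \<and> proj_xmu (binQ d p f a1 a2) = (x, \<mu>)"
proof -
  from assms have x0: "\<forall>i. i \<notin> {1,2} \<longrightarrow> x i = 0" and mu: "\<mu> = f 1 (x 1) * f 2 (x 2)"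
    and x1: "x 1 \<in> p 1 ` {0..d 1}" and x2: "x 2 \<in> p 2 ` {0..d 2}" by (auto simp: Sset_def)
  obtain a1 where a1: "a1 \<le> d 1" "x 1 = p 1 a1" using x1 by auto
  obtain a2 where a2: "a2 \<le> d 2" "x 2 = p 2 a2" using x2 by auto
  have "proj_xmu (binQ d p f a1 a2) = (x, \<mu>)"
    using x0 a1 a2 mu by (auto simp: proj_xmu_def binQ_def fun_eq_iff)
  then show ?thesis using a1 a2 by blast
qed

lemma Q_bin: assumes v: "(x, z, \<mu>) \<in> Qset d p f \<sigma> \<tau>" and b: "binary_z d (x, z, \<mu>)"
  shows "\<exists>a1 a2. a1 \<le> d 1 \<and> a2 \<le> d 2 \<and> (x, z, \<mu>) = binQ d p f a1 a2"
proof -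
  from v have x0: "\<forall>i. i \<notin> {1,2} \<longrightarrow> x i = 0" and z0: "\<forall>i j. \<not> (i \<in> {1,2} \<and> j \<in> {1..d i}) \<longrightarrow> z i j = 0"
   and inB1: "in_B (d 1) (p 1) (x 1) (z 1)" and inB2: "in_B (d 2) (p 2) (x 2) (z 2)"
   and ex: "\<exists>z' z''.
        (\<forall>i\<in>{1,2}. \<forall>j\<in>{1..d i}. z i j = Lmap (d i) (\<sigma> i) (z' i) j) \<and>
        (\<forall>i\<in>{1,2}. \<forall>j\<in>{1..d i}. z i j = Lmap (d i) (\<tau> i) (z'' i) j) \<and>
        (\<forall>s. is_staircase d s \<longrightarrow>
              \<mu> \<le> stair_rhs (psi f p \<sigma>) d s z' \<and>
              \<mu> \<ge> stair_rhs (psi f p \<tau>) d s z'')"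
    unfolding Qset_def by auto
  obtain z' z'' where Lz': "\<forall>i\<in>{1,2}. \<forall>j\<in>{1..d i}. z i j = Lmap (d i) (\<sigma> i) (z' i) j"
     and Lz'': "\<forall>i\<in>{1,2}. \<forall>j\<in>{1..d i}. z i j = Lmap (d i) (\<tau> i) (z'' i) j"
     and St: "\<forall>s. is_staircase d s \<longrightarrow> \<mu> \<le> stair_rhs (psi f p \<sigma>) d s z' \<and> \<mu> \<ge> stair_rhs (psi f p \<tau>) d s z''"
    using ex by blast
  obtain a1 where a1: "a1 \<le> d 1" "\<forall>j\<in>{1..d 1}. z 1 j = ind a1 j"
    using bin_delta[of "d 1" "z 1"] inB1 d1 b by (auto simp: in_B_def binary_z_def)
  obtain a2 where a2: "a2 \<le> d 2" "\<forall>j\<in>{1..d 2}. z 2 j = ind a2 j"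
    using bin_delta[of "d 2" "z 2"] inB2 d2 b by (auto simp: in_B_def binary_z_def)
  define b1 b2 c1 c2 where "b1 = inv (\<sigma> 1) a1" and "b2 = inv (\<sigma> 2) a2" and "c1 = inv (\<tau> 1) a1" and "c2 = inv (\<tau> 2) a2"
  note i1 = inv_facts[OF sp1 a1(1), folded b1_def] and i2 = inv_facts[OF sp2 a2(1), folded b2_def]
   and i3 = inv_facts[OF tp1 a1(1), folded c1_def] and i4 = inv_facts[OF tp2 a2(1), folded c2_def]
  have z'1: "\<forall>j\<in>{1..d 1}. z' 1 j = ind b1 j" using recover[OF sp1 a1(1) a1(2)] Lz' b1_def by auto
  have z'2: "\<forall>j\<in>{1..d 2}. z' 2 j = ind b2 j" using recover[OF sp2 a2(1) a2(2)] Lz' b2_def by auto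
  have z''1: "\<forall>j\<in>{1..d 1}. z'' 1 j = ind c1 j" using recover[OF tp1 a1(1) a1(2)] Lz'' c1_def by auto
  have z''2: "\<forall>j\<in>{1..d 2}. z'' 2 j = ind c2 j" using recover[OF tp2 a2(1) a2(2)] Lz'' c2_def by auto
  have "\<mu> \<le> stair_rhs (psi f p \<sigma>) d (s0 d b1) z'" using St s0_stair[of b1 d] i1 by auto
  also have "\<dots> = stair_rhs (psi f p \<sigma>) d (s0 d b1) (zind b1 b2)"
    by (rule stair_rhs_cong[OF s0_stair[of b1 d, OF i1(1)]]) (use z'1 z'2 in \<open>auto simp: zind_def\<close>)
  also have "\<dots> = psi f p \<sigma> (b1, b2)" by (rule s0_eq[OF i1(1) i2(1)])
  also have "\<dots> = f 1 (p 1 a1) * f 2 (p 2 a2)" using i1 i2 by (simp add: psi_def)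
  finally have mu1: "\<mu> \<le> f 1 (p 1 a1) * f 2 (p 2 a2)" .
  have "f 1 (p 1 a1) * f 2 (p 2 a2) = psi f p \<tau> (c1, c2)" using i3 i4 by (simp add: psi_def)
  also have "\<dots> = stair_rhs (psi f p \<tau>) d (s0 d c1) (zind c1 c2)" by (rule s0_eq[symmetric, OF i3(1) i4(1)])
  also have "\<dots> = stair_rhs (psi f p \<tau>) d (s0 d c1) z''"
    by (rule stair_rhs_cong[OF s0_stair[of c1 d, OF i3(1)]]) (use z''1 z''2 in \<open>auto simp: zind_def\<close>)
  also have "\<dots> \<le> \<mu>" using St s0_stair[of c1 d] i3 by auto
  finally have mu2: "f 1 (p 1 a1) * f 2 (p 2 a2) \<le> \<mu>" .
  have xa1: "x 1 = p 1 a1"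
  proof -
    have "x 1 = p 1 0 + (\<Sum>j\<in>{1..d 1}. (p 1 j - p 1 (j - 1)) * z 1 j)" using inB1 by (simp add: in_B_def)
    also have "\<dots> = p 1 0 + (\<Sum>j\<in>{1..d 1}. (p 1 j - p 1 (j - 1)) * ind a1 j)" using a1 by simp
    also have "\<dots> = p 1 a1" using p_tel[OF a1(1)] by simp
    finally show ?thesis .
  qed
  have xa2: "x 2 = p 2 a2"
  proof -
    have "x 2 = p 2 0 + (\<Sum>j\<in>{1..d 2}. (p 2 j - p 2 (j - 1)) * z 2 j)" using inB2 by (simp add: in_B_def)
    also have "\<dots> = p 2 0 + (\<Sum>j\<in>{1..d 2}. (p 2 j - p 2 (j - 1)) * ind a2 j)" using a2 by simp
    also have "\<dots> = p 2 a2" using p_tel[OF a2(1)] by simp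
    finally show ?thesis .
  qed
  have "x = fst (binQ d p f a1 a2)" using x0 xa1 xa2 by (auto simp: binQ_def fun_eq_iff)
  moreover have "z = fst (snd (binQ d p f a1 a2))"
  proof (intro ext)
    fix i j show "z i j = fst (snd (binQ d p f a1 a2)) i j"
    proof (cases "i \<in> {1,2} \<and> j \<in> {1..d i}")
      case True then show ?thesis using a1(2) a2(2) by (auto simp: binQ_def)
    next
      case False
      then have "fst (snd (binQ d p f a1 a2)) i j = 0" by (auto simp: binQ_def)
      then show ?thesis using z0 False by simp
    qed
  qed
  moreover have "\<mu> = snd (snd (binQ d p f a1 a2))" using mu1 mu2 by (simp add: binQ_def)
  ultimately show ?thesis using a1 a2 by (metis prod.collapse)
qed

end


lemma Lmap_comb: assumes "\<rho> permutes {0..d}"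
  shows "Lmap d \<rho> (\<lambda>k. \<theta> * y k + (1 - \<theta>) * y' k) j = \<theta> * Lmap d \<rho> y j + (1 - \<theta>) * Lmap d \<rho> y' j"
proof -
  have "Lmap d \<rho> (\<lambda>k. \<theta> * y k + (1 - \<theta>) * y' k) j =
     (\<Sum>t\<in>{0::nat,1}. (if t = 0 then \<theta> else 1 - \<theta>) * Lmap d \<rho> (if t = 0 then y else y') j)"
    by (rule Lmap_affine[OF assms]) auto
  then show ?thesis by simp
qed

lemma stair_rhs_comb: "stair_rhs ps d s (\<lambda>i j. \<theta> * a i j + (1 - \<theta>) * b i j) =
    \<theta> * stair_rhs ps d s a + (1 - \<theta>) * stair_rhs ps d s b"
proof -
  have "(\<Sum>t\<in>{1..d 1 + d 2}. (ps (jpt s t) - ps (jpt s (t - 1))) * (\<theta> * a (s t) (stair2 s t) + (1 - \<theta>) * b (s t) (stair2 s t)))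
     = \<theta> * (\<Sum>t\<in>{1..d 1 + d 2}. (ps (jpt s t) - ps (jpt s (t - 1))) * a (s t) (stair2 s t))
       + (1 - \<theta>) * (\<Sum>t\<in>{1..d 1 + d 2}. (ps (jpt s t) - ps (jpt s (t - 1))) * b (s t) (stair2 s t))"
    by (simp add: sum_distrib_left sum.distrib[symmetric] algebra_simps)
  then show ?thesis unfolding stair_rhs_def by (simp add: algebra_simps)
qed

lemma Delta_comb: assumes "in_Delta d y" "in_Delta d y'" "0 \<le> \<theta>" "\<theta> \<le> 1"
  shows "in_Delta d (\<lambda>j. \<theta> * y j + (1 - \<theta>) * y' j)"
proof -
  have A: "\<theta> * u + (1 - \<theta>) * u' \<le> \<theta> * v + (1 - \<theta>) * v'" if "u \<le> v" "u' \<le> v'" for u u' v v' :: real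
    using mult_left_mono[OF that(1) assms(3)] mult_left_mono[OF that(2), of "1 - \<theta>"] assms(4) by simp
  show ?thesis using assms unfolding in_Delta_def
    using A[of "y 1" 1 "y' 1" 1] A[of 0 "y d" 0 "y' d"] A by auto
qed

lemma inB_comb: assumes "in_B d q x y" "in_B d q x' y'" "0 \<le> \<theta>" "\<theta> \<le> 1"
  shows "in_B d q (\<theta> * x + (1 - \<theta>) * x') (\<lambda>j. \<theta> * y j + (1 - \<theta>) * y' j)"
proof -
  have "\<theta> * x + (1 - \<theta>) * x' = q 0 + (\<Sum>j\<in>{1..d}. (q j - q (j - 1)) * (\<theta> * y j + (1 - \<theta>) * y' j))"
  proof -
    have S: "(\<Sum>j\<in>{1..d}. (q j - q (j - 1)) * (\<theta> * y j + (1 - \<theta>) * y' j)) =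
       \<theta> * (\<Sum>j\<in>{1..d}. (q j - q (j - 1)) * y j) + (1 - \<theta>) * (\<Sum>j\<in>{1..d}. (q j - q (j - 1)) * y' j)"
      by (simp add: sum_distrib_left sum.distrib[symmetric] algebra_simps)
    show ?thesis unfolding S using assms(1,2) unfolding in_B_def by (simp add: algebra_simps)
  qed
  then show ?thesis using Delta_comb assms unfolding in_B_def by blast
qed

context setting
begin

lemma Q_convex: "\<forall>a\<in>Qset d p f \<sigma> \<tau>. \<forall>b\<in>Qset d p f \<sigma> \<tau>. \<forall>\<theta>. 0 \<le> \<theta> \<and> \<theta> \<le> 1 \<longrightarrow> comb \<theta> a b \<in> Qset d p f \<sigma> \<tau>"
proof (intro ballI allI impI)
  fix a b and \<theta> :: real
  assume aQ: "a \<in> Qset d p f \<sigma> \<tau>" and bQ: "b \<in> Qset d p f \<sigma> \<tau>" and th: "0 \<le> \<theta> \<and> \<theta> \<le> 1"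
  obtain xa za \<mu>a where a: "a = (xa, za, \<mu>a)" by (cases a)
  obtain xb zb \<mu>b where b: "b = (xb, zb, \<mu>b)" by (cases b)
  from aQ[unfolded a] have xa0: "\<forall>i. i \<notin> {1,2} \<longrightarrow> xa i = 0" and za0: "\<forall>i j. \<not> (i \<in> {1,2} \<and> j \<in> {1..d i}) \<longrightarrow> za i j = 0"
   and inBa1: "in_B (d 1) (p 1) (xa 1) (za 1)" and inBa2: "in_B (d 2) (p 2) (xa 2) (za 2)"
   and exa: "\<exists>z' z''.
        (\<forall>i\<in>{1,2}. \<forall>j\<in>{1..d i}. za i j = Lmap (d i) (\<sigma> i) (z' i) j) \<and>
        (\<forall>i\<in>{1,2}. \<forall>j\<in>{1..d i}. za i j = Lmap (d i) (\<tau> i) (z'' i) j) \<and>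
        (\<forall>s. is_staircase d s \<longrightarrow>
              \<mu>a \<le> stair_rhs (psi f p \<sigma>) d s z' \<and>
              \<mu>a \<ge> stair_rhs (psi f p \<tau>) d s z'')"
    unfolding Qset_def by auto
  from bQ[unfolded b] have xb0: "\<forall>i. i \<notin> {1,2} \<longrightarrow> xb i = 0" and zb0: "\<forall>i j. \<not> (i \<in> {1,2} \<and> j \<in> {1..d i}) \<longrightarrow> zb i j = 0"
   and inBb1: "in_B (d 1) (p 1) (xb 1) (zb 1)" and inBb2: "in_B (d 2) (p 2) (xb 2) (zb 2)"
   and exb: "\<exists>z' z''.
        (\<forall>i\<in>{1,2}. \<forall>j\<in>{1..d i}. zb i j = Lmap (d i) (\<sigma> i) (z' i) j) \<and>
        (\<forall>i\<in>{1,2}. \<forall>j\<in>{1..d i}. zb i j = Lmap (d i) (\<tau> i) (z'' i) j) \<and>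
        (\<forall>s. is_staircase d s \<longrightarrow>
              \<mu>b \<le> stair_rhs (psi f p \<sigma>) d s z' \<and>
              \<mu>b \<ge> stair_rhs (psi f p \<tau>) d s z'')"
    unfolding Qset_def by auto
  obtain za' za'' where La': "\<forall>i\<in>{1,2}. \<forall>j\<in>{1..d i}. za i j = Lmap (d i) (\<sigma> i) (za' i) j"
     and La'': "\<forall>i\<in>{1,2}. \<forall>j\<in>{1..d i}. za i j = Lmap (d i) (\<tau> i) (za'' i) j"
     and Sa: "\<forall>s. is_staircase d s \<longrightarrow> \<mu>a \<le> stair_rhs (psi f p \<sigma>) d s za' \<and> \<mu>a \<ge> stair_rhs (psi f p \<tau>) d s za''"
    using exa by blast
  obtain zb' zb'' where Lb': "\<forall>i\<in>{1,2}. \<forall>j\<in>{1..d i}. zb i j = Lmap (d i) (\<sigma> i) (zb' i) j"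
     and Lb'': "\<forall>i\<in>{1,2}. \<forall>j\<in>{1..d i}. zb i j = Lmap (d i) (\<tau> i) (zb'' i) j"
     and Sb: "\<forall>s. is_staircase d s \<longrightarrow> \<mu>b \<le> stair_rhs (psi f p \<sigma>) d s zb' \<and> \<mu>b \<ge> stair_rhs (psi f p \<tau>) d s zb''"
    using exb by blast
  define zc' where "zc' = (\<lambda>i j. \<theta> * za' i j + (1 - \<theta>) * zb' i j)"
  define zc'' where "zc'' = (\<lambda>i j. \<theta> * za'' i j + (1 - \<theta>) * zb'' i j)"
  have c: "comb \<theta> a b = ((\<lambda>i. \<theta> * xa i + (1 - \<theta>) * xb i), (\<lambda>i j. \<theta> * za i j + (1 - \<theta>) * zb i j), \<theta> * \<mu>a + (1 - \<theta>) * \<mu>b)"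
    by (simp add: comb_def a b)
  have Lc': "\<forall>i\<in>{1,2}. \<forall>j\<in>{1..d i}. \<theta> * za i j + (1 - \<theta>) * zb i j = Lmap (d i) (\<sigma> i) (zc' i) j"
  proof (intro ballI)
    fix i j assume i: "i \<in> {1,2}" and j: "j \<in> {1..d i}"
    have pm: "\<sigma> i permutes {0..d i}" using \<sigma>_perm i by auto
    show "\<theta> * za i j + (1 - \<theta>) * zb i j = Lmap (d i) (\<sigma> i) (zc' i) j"
      unfolding zc'_def using Lmap_comb[OF pm, of \<theta> "za' i" "zb' i" j] La' Lb' i j by auto
  qed
  have Lc'': "\<forall>i\<in>{1,2}. \<forall>j\<in>{1..d i}. \<theta> * za i j + (1 - \<theta>) * zb i j = Lmap (d i) (\<tau> i) (zc'' i) j"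
  proof (intro ballI)
    fix i j assume i: "i \<in> {1,2}" and j: "j \<in> {1..d i}"
    have pm: "\<tau> i permutes {0..d i}" using \<tau>_perm i by auto
    show "\<theta> * za i j + (1 - \<theta>) * zb i j = Lmap (d i) (\<tau> i) (zc'' i) j"
      unfolding zc''_def using Lmap_comb[OF pm, of \<theta> "za'' i" "zb'' i" j] La'' Lb'' i j by auto
  qed
  have Sc: "\<forall>s. is_staircase d s \<longrightarrow> \<theta> * \<mu>a + (1 - \<theta>) * \<mu>b \<le> stair_rhs (psi f p \<sigma>) d s zc' \<and>
                  \<theta> * \<mu>a + (1 - \<theta>) * \<mu>b \<ge> stair_rhs (psi f p \<tau>) d s zc''"
  proof (intro allI impI conjI)
    fix s assume s: "is_staircase d s"
    have t: "0 \<le> \<theta>" "0 \<le> 1 - \<theta>" using th by auto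
    show "\<theta> * \<mu>a + (1 - \<theta>) * \<mu>b \<le> stair_rhs (psi f p \<sigma>) d s zc'"
      unfolding zc'_def stair_rhs_comb
      using mult_left_mono[OF conjunct1[OF Sa[rule_format, OF s]] t(1)] mult_left_mono[OF conjunct1[OF Sb[rule_format, OF s]] t(2)]
      by linarith
    show "\<theta> * \<mu>a + (1 - \<theta>) * \<mu>b \<ge> stair_rhs (psi f p \<tau>) d s zc''"
      unfolding zc''_def stair_rhs_comb
      using mult_left_mono[OF conjunct2[OF Sa[rule_format, OF s]] t(1)] mult_left_mono[OF conjunct2[OF Sb[rule_format, OF s]] t(2)]
      by linarith
  qed
  have B1: "in_B (d 1) (p 1) (\<theta> * xa 1 + (1 - \<theta>) * xb 1) (\<lambda>j. \<theta> * za 1 j + (1 - \<theta>) * zb 1 j)"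
    using inB_comb[OF inBa1 inBb1] th by auto
  have B2: "in_B (d 2) (p 2) (\<theta> * xa 2 + (1 - \<theta>) * xb 2) (\<lambda>j. \<theta> * za 2 j + (1 - \<theta>) * zb 2 j)"
    using inB_comb[OF inBa2 inBb2] th by auto
  show "comb \<theta> a b \<in> Qset d p f \<sigma> \<tau>"
    unfolding c Qset_def mem_Collect_eq prod.case
    apply (intro conjI)
    subgoal using xa0 xb0 by auto
    subgoal using za0 zb0 by auto
    subgoal using B1 B2 by simp
    apply (rule exI[of _ zc'], rule exI[of _ zc''])
    using Lc' Lc'' Sc by blast
qed

end


context setting
begin

lemma decomp:
  assumes perm: "\<forall>i\<in>{1,2}. \<rho> i permutes {0..d i}"
    and x0: "\<forall>i. i \<notin> {1,2} \<longrightarrow> x i = 0" and z0: "\<forall>i j. \<not> (i \<in> {1,2} \<and> j \<in> {1..d i}) \<longrightarrow> z i j = 0"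
    and inB: "\<forall>i\<in>{1,2}. in_B (d i) (p i) (x i) (z i)"
    and Lz: "\<forall>i\<in>{1,2}. \<forall>j\<in>{1..d i}. z i j = Lmap (d i) (\<rho> i) (zz i) j"
    and st: "is_staircase d s" and so: "sorted_st d s zz"
  shows "psum {0..d 1 + d 2} (\<lambda>t. VV d s zz t - VV d s zz (Suc t))
           (\<lambda>t. binQ d p f (\<rho> 1 (fst (jpt s t))) (\<rho> 2 (snd (jpt s t))))
         = (x, z, stair_rhs (psi f p \<rho>) d s zz)"
proof -
  define N where "N = d 1 + d 2"
  define W where "W t = VV d s zz t - VV d s zz (Suc t)" for t
  have Wsum: "sum W {0..N} = 1" using W_sum unfolding W_def N_def .
  have cob: "co (jpt s t) i \<le> d i" if "t \<in> {0..N}" "i \<in> {1,2}" for t i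
    using jpt_bound[OF st, of t] that by (auto simp: co_def N_def)
  have rco: "\<rho> i (co (jpt s t) i) \<le> d i" if "t \<in> {0..N}" "i \<in> {1,2}" for t i
    using permutes_in_image[of "\<rho> i" "{0..d i}" "co (jpt s t) i"] perm cob[OF that] that(2) by auto
  have zpart: "(\<Sum>t\<in>{0..N}. W t * ind (\<rho> i (co (jpt s t) i)) j) = z i j" if i: "i \<in> {1,2}" and j: "j \<in> {1..d i}" for i j
  proof -
    have pm: "\<rho> i permutes {0..d i}" using perm i by auto
    have "(\<Sum>t\<in>{0..N}. W t * ind (\<rho> i (co (jpt s t) i)) j) = (\<Sum>t\<in>{0..N}. W t * Lmap (d i) (\<rho> i) (ind (co (jpt s t) i)) j)"
      using Lmap_ind[OF pm cob] i by (intro sum.cong) auto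
    also have "\<dots> = Lmap (d i) (\<rho> i) (zz i) j"
    proof (rule Lmap_affine[OF pm _ Wsum, symmetric])
      show "\<forall>k\<in>{1..d i}. zz i k = (\<Sum>t\<in>{0..N}. W t * ind (co (jpt s t) i) k)"
        using decomp_z[OF st i] unfolding W_def N_def by auto
    qed simp
    also have "\<dots> = z i j" using Lz i j by auto
    finally show ?thesis .
  qed
  have xpart: "(\<Sum>t\<in>{0..N}. W t * p i (\<rho> i (co (jpt s t) i))) = x i" if i: "i \<in> {1,2}" for i
  proof -
    have "(\<Sum>t\<in>{0..N}. W t * p i (\<rho> i (co (jpt s t) i))) =
        (\<Sum>t\<in>{0..N}. W t * (p i 0 + (\<Sum>j\<in>{1..d i}. (p i j - p i (j - 1)) * ind (\<rho> i (co (jpt s t) i)) j)))"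
      using p_tel[OF rco] i by (intro sum.cong) auto
    also have "\<dots> = sum W {0..N} * p i 0 + (\<Sum>j\<in>{1..d i}. (p i j - p i (j - 1)) * (\<Sum>t\<in>{0..N}. W t * ind (\<rho> i (co (jpt s t) i)) j))"
      by (simp add: algebra_simps sum.distrib sum_distrib_left sum_distrib_right) (rule sum.swap)
    also have "\<dots> = p i 0 + (\<Sum>j\<in>{1..d i}. (p i j - p i (j - 1)) * z i j)"
      using zpart[OF i] Wsum by simp
    also have "\<dots> = x i" using inB i by (auto simp: in_B_def)
    finally show ?thesis .
  qed
  have mupart: "(\<Sum>t\<in>{0..N}. W t * snd (snd (binQ d p f (\<rho> 1 (fst (jpt s t))) (\<rho> 2 (snd (jpt s t)))))) = stair_rhs (psi f p \<rho>) d s zz"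
    using decomp_mu[of d s zz "psi f p \<rho>"] unfolding W_def N_def by (simp add: binQ_def psi_def)
  have X: "(\<lambda>i. \<Sum>t\<in>{0..N}. W t * fst (binQ d p f (\<rho> 1 (fst (jpt s t))) (\<rho> 2 (snd (jpt s t)))) i) = x"
  proof
    fix i show "(\<Sum>t\<in>{0..N}. W t * fst (binQ d p f (\<rho> 1 (fst (jpt s t))) (\<rho> 2 (snd (jpt s t)))) i) = x i"
    proof (cases "i \<in> {1,2}")
      case True
      then show ?thesis using xpart[OF True] by (auto simp: binQ_def co_def)
    next
      case False then show ?thesis using x0 by (auto simp: binQ_def)
    qed
  qed
  have Z: "(\<lambda>i j. \<Sum>t\<in>{0..N}. W t * fst (snd (binQ d p f (\<rho> 1 (fst (jpt s t))) (\<rho> 2 (snd (jpt s t))))) i j) = z"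
  proof (intro ext)
    fix i j show "(\<Sum>t\<in>{0..N}. W t * fst (snd (binQ d p f (\<rho> 1 (fst (jpt s t))) (\<rho> 2 (snd (jpt s t))))) i j) = z i j"
    proof (cases "i \<in> {1,2} \<and> j \<in> {1..d i}")
      case True
      then show ?thesis using zpart[of i j] by (auto simp: binQ_def co_def)
    next
      case False
      then have "fst (snd (binQ d p f (\<rho> 1 (fst (jpt s t))) (\<rho> 2 (snd (jpt s t))))) i j = 0" for t
        by (auto simp: binQ_def)
      then show ?thesis using z0 False by simp
    qed
  qed
  show ?thesis unfolding psum_def using X Z mupart unfolding W_def N_def by simp
qed

end


lemma zDelta: assumes "\<rho> permutes {0..n}" "1 \<le> n" "in_Delta n y" "\<forall>j\<in>{1..n}. y j = Lmap n \<rho> y' j"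
  shows "in_Delta n y'"
proof -
  have "in_Delta n (Lmap n (inv \<rho>) y)" using Lmap_Delta[OF permutes_inv[OF assms(1)] assms(3,2)] .
  moreover have "\<forall>j\<in>{1..n}. Lmap n (inv \<rho>) y j = y' j"
  proof
    fix j assume j: "j \<in> {1..n}"
    have "Lmap n (inv \<rho>) y = Lmap n (inv \<rho>) (Lmap n \<rho> y')" using assms(4) by (intro Lmap_cong) auto
    then show "Lmap n (inv \<rho>) y j = y' j" using Lmap_inv[OF assms(1) j] by simp
  qed
  ultimately show ?thesis using Delta_cong assms(2) by blast
qed

context setting
begin

lemma vertex_bin: assumes vx: "is_vertex v (Qset d p f \<sigma> \<tau>)" shows "binary_z d v"
proof -
  have vQ: "v \<in> Qset d p f \<sigma> \<tau>" using vx by (simp add: is_vertex_def)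
  obtain x z \<mu> where v: "v = (x, z, \<mu>)" by (cases v)
  from vQ[unfolded v] have x0: "\<forall>i. i \<notin> {1,2} \<longrightarrow> x i = 0" and z0: "\<forall>i j. \<not> (i \<in> {1,2} \<and> j \<in> {1..d i}) \<longrightarrow> z i j = 0"
   and inB: "\<forall>i\<in>{1,2}. in_B (d i) (p i) (x i) (z i)"
   and ex: "\<exists>z' z''.
        (\<forall>i\<in>{1,2}. \<forall>j\<in>{1..d i}. z i j = Lmap (d i) (\<sigma> i) (z' i) j) \<and>
        (\<forall>i\<in>{1,2}. \<forall>j\<in>{1..d i}. z i j = Lmap (d i) (\<tau> i) (z'' i) j) \<and>
        (\<forall>s. is_staircase d s \<longrightarrow>
              \<mu> \<le> stair_rhs (psi f p \<sigma>) d s z' \<and>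
              \<mu> \<ge> stair_rhs (psi f p \<tau>) d s z'')"
    unfolding Qset_def by auto
  obtain z' z'' where L': "\<forall>i\<in>{1,2}. \<forall>j\<in>{1..d i}. z i j = Lmap (d i) (\<sigma> i) (z' i) j"
     and L'': "\<forall>i\<in>{1,2}. \<forall>j\<in>{1..d i}. z i j = Lmap (d i) (\<tau> i) (z'' i) j"
     and S: "\<forall>s. is_staircase d s \<longrightarrow> \<mu> \<le> stair_rhs (psi f p \<sigma>) d s z' \<and> \<mu> \<ge> stair_rhs (psi f p \<tau>) d s z''"
    using ex by blast
  have Dz1: "in_Delta (d 1) (z 1)" and Dz2: "in_Delta (d 2) (z 2)" using inB by (auto simp: in_B_def)
  have D'1: "in_Delta (d 1) (z' 1)" using zDelta[OF sp1 d1 Dz1] L' by auto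
  have D'2: "in_Delta (d 2) (z' 2)" using zDelta[OF sp2 d2 Dz2] L' by auto
  have D''1: "in_Delta (d 1) (z'' 1)" using zDelta[OF tp1 d1 Dz1] L'' by auto
  have D''2: "in_Delta (d 2) (z'' 2)" using zDelta[OF tp2 d2 Dz2] L'' by auto
  obtain s1 where s1: "is_staircase d s1" "sorted_st d s1 z'" using sorted_exists[OF D'1 D'2] by blast
  obtain s2 where s2: "is_staircase d s2" "sorted_st d s2 z''" using sorted_exists[OF D''1 D''2] by blast
  define N where "N = d 1 + d 2"
  have N1: "1 \<le> N" using d1 by (simp add: N_def)
  define W1 where "W1 t = VV d s1 z' t - VV d s1 z' (Suc t)" for t
  define W2 where "W2 t = VV d s2 z'' t - VV d s2 z'' (Suc t)" for t
  define P1 where "P1 t = binQ d p f (\<sigma> 1 (fst (jpt s1 t))) (\<sigma> 2 (snd (jpt s1 t)))" for t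
  define P2 where "P2 t = binQ d p f (\<tau> 1 (fst (jpt s2 t))) (\<tau> 2 (snd (jpt s2 t)))" for t
  define U where "U = stair_rhs (psi f p \<sigma>) d s1 z'"
  define L where "L = stair_rhs (psi f p \<tau>) d s2 z''"
  have B1: "psum {0..N} W1 P1 = (x, z, U)"
    unfolding W1_def P1_def U_def N_def using decomp[OF \<sigma>_perm x0 z0 inB L' s1] .
  have B2: "psum {0..N} W2 P2 = (x, z, L)"
    unfolding W2_def P2_def L_def N_def using decomp[OF \<tau>_perm x0 z0 inB L'' s2] .
  have W1p: "\<forall>t\<in>{0..N}. 0 \<le> W1 t" using W_nonneg[OF s1(2)] N1 unfolding W1_def N_def by auto
  have W2p: "\<forall>t\<in>{0..N}. 0 \<le> W2 t" using W_nonneg[OF s2(2)] N1 unfolding W2_def N_def by auto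
  have W1s: "sum W1 {0..N} = 1" using W_sum unfolding W1_def N_def .
  have W2s: "sum W2 {0..N} = 1" using W_sum unfolding W2_def N_def .
  have P1Q: "\<forall>t\<in>{0..N}. P1 t \<in> Qset d p f \<sigma> \<tau>"
  proof
    fix t assume t: "t \<in> {0..N}"
    have b: "fst (jpt s1 t) \<le> d 1" "snd (jpt s1 t) \<le> d 2" using jpt_bound[OF s1(1), of t] t by (auto simp: N_def)
    show "P1 t \<in> Qset d p f \<sigma> \<tau>" unfolding P1_def
      using binQ_in permutes_in_image[OF sp1, of "fst (jpt s1 t)"] permutes_in_image[OF sp2, of "snd (jpt s1 t)"] b by auto
  qed
  have P2Q: "\<forall>t\<in>{0..N}. P2 t \<in> Qset d p f \<sigma> \<tau>"
  proof
    fix t assume t: "t \<in> {0..N}"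
    have b: "fst (jpt s2 t) \<le> d 1" "snd (jpt s2 t) \<le> d 2" using jpt_bound[OF s2(1), of t] t by (auto simp: N_def)
    show "P2 t \<in> Qset d p f \<sigma> \<tau>" unfolding P2_def
      using binQ_in permutes_in_image[OF tp1, of "fst (jpt s2 t)"] permutes_in_image[OF tp2, of "snd (jpt s2 t)"] b by auto
  qed
  have B1Q: "(x, z, U) \<in> Qset d p f \<sigma> \<tau>" using psum_in[OF Q_convex _ W1p W1s P1Q] B1 by simp
  have B2Q: "(x, z, L) \<in> Qset d p f \<sigma> \<tau>" using psum_in[OF Q_convex _ W2p W2s P2Q] B2 by simp
  have muU: "\<mu> \<le> U" and muL: "L \<le> \<mu>" using S s1(1) s2(1) unfolding U_def L_def by auto
  have case1: "binary_z d v" if vU: "v = (x, z, U)"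
  proof -
    obtain t where "t \<in> {0..N}" "v = P1 t"
      using vertex_psum[OF Q_convex vx _ W1p W1s P1Q] B1 vU by auto
    then show ?thesis using binQ_binary unfolding P1_def by simp
  qed
  have case2: "binary_z d v" if vL: "v = (x, z, L)"
  proof -
    obtain t where "t \<in> {0..N}" "v = P2 t"
      using vertex_psum[OF Q_convex vx _ W2p W2s P2Q] B2 vL by auto
    then show ?thesis using binQ_binary unfolding P2_def by simp
  qed
  show ?thesis
  proof (cases "U = L")
    case True
    then have "\<mu> = U" using muU muL by simp
    then show ?thesis using case1 v by simp
  next
    case False
    then have LU: "L < U" using muU muL by simp
    define \<theta> where "\<theta> = (\<mu> - L) / (U - L)"
    have th: "0 \<le> \<theta>" "\<theta> \<le> 1" using LU muU muL by (auto simp: \<theta>_def field_simps)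
    have m1: "\<theta> * (U - L) = \<mu> - L" using LU by (simp add: \<theta>_def)
    have m2: "\<theta> * U + (1 - \<theta>) * L = L + \<theta> * (U - L)" by (simp add: algebra_simps)
    have mueq: "\<theta> * U + (1 - \<theta>) * L = \<mu>" using m1 m2 by simp
    have vc: "v = comb \<theta> (x, z, U) (x, z, L)"
      using mueq unfolding v comb_def by (simp add: algebra_simps)
    show ?thesis
    proof (cases "\<theta> = 0")
      case True then show ?thesis using vc comb_0 case2 by simp
    next
      case th0: False
      show ?thesis
      proof (cases "\<theta> = 1")
        case True then show ?thesis using vc comb_1 case1 by simp
      next
        case False
        have "(x, z, U) \<noteq> (x, z, L)" using LU by simp
        then have False using vx B1Q B2Q vc th th0 False unfolding is_vertex_def
          by (metis order_le_less)
        then show ?thesis ..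
      qed
    qed
  qed
qed

lemma main: "ideal_MIP_formulation (Qset d p f \<sigma> \<tau>) (binary_z d) proj_xmu (Sset d p f)"
  unfolding ideal_MIP_formulation_def
proof (intro conjI allI impI)
  show "proj_xmu ` {v \<in> Qset d p f \<sigma> \<tau>. binary_z d v} = Sset d p f"
  proof
    show "proj_xmu ` {v \<in> Qset d p f \<sigma> \<tau>. binary_z d v} \<subseteq> Sset d p f"
    proof
      fix y assume "y \<in> proj_xmu ` {v \<in> Qset d p f \<sigma> \<tau>. binary_z d v}"
      then obtain v where v: "v \<in> Qset d p f \<sigma> \<tau>" "binary_z d v" "y = proj_xmu v" by auto
      obtain x z \<mu> where vv: "v = (x, z, \<mu>)" by (cases v)
      obtain a1 a2 where "a1 \<le> d 1" "a2 \<le> d 2" "v = binQ d p f a1 a2" using Q_bin v vv by blast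
      then show "y \<in> Sset d p f" using binQ_S v by simp
    qed
  next
    show "Sset d p f \<subseteq> proj_xmu ` {v \<in> Qset d p f \<sigma> \<tau>. binary_z d v}"
    proof
      fix y assume y: "y \<in> Sset d p f"
      obtain x \<mu> where yy: "y = (x, \<mu>)" by (cases y)
      obtain a1 a2 where a: "a1 \<le> d 1" "a2 \<le> d 2" "proj_xmu (binQ d p f a1 a2) = (x, \<mu>)"
        using S_binQ y yy by blast
      then show "y \<in> proj_xmu ` {v \<in> Qset d p f \<sigma> \<tau>. binary_z d v}"
        using binQ_in[OF a(1,2)] binQ_binary yy by (metis (mono_tags, lifting) image_eqI mem_Collect_eq)
    qed
  qed
next
  fix v assume "is_vertex v (Qset d p f \<sigma> \<tau>)"
  then show "binary_z d v" by (rule vertex_bin)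
qed

end

theorem proposition3:
  fixes d :: "nat \<Rightarrow> nat" and p :: "nat \<Rightarrow> nat \<Rightarrow> real" and f :: "nat \<Rightarrow> real \<Rightarrow> real"
    and \<sigma> \<tau> :: "nat \<Rightarrow> nat \<Rightarrow> nat"
  assumes d_pos: "\<forall>i\<in>{1,2}. d i \<ge> 1"
    and p_incr: "\<forall>i\<in>{1,2}. \<forall>j. j < d i \<longrightarrow> p i j < p i (j + 1)"
    and \<sigma>_perm: "\<forall>i\<in>{1,2}. \<sigma> i permutes {0..d i}"
    and \<tau>_perm: "\<forall>i\<in>{1,2}. \<tau> i permutes {0..d i}"
    and \<sigma>_sorted: "\<forall>i\<in>{1,2}. \<forall>k. k < d i \<longrightarrow>
                    f i (p i (\<sigma> i k)) \<le> f i (p i (\<sigma> i (k + 1)))"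
    and \<tau>1_sorted: "\<forall>k. k < d 1 \<longrightarrow> f 1 (p 1 (\<tau> 1 k)) \<le> f 1 (p 1 (\<tau> 1 (k + 1)))"
    and \<tau>2_sorted: "\<forall>k. k < d 2 \<longrightarrow> f 2 (p 2 (\<tau> 2 k)) \<ge> f 2 (p 2 (\<tau> 2 (k + 1)))"
  shows "ideal_MIP_formulation (Qset d p f \<sigma> \<tau>) (binary_z d) proj_xmu (Sset d p f)"
proof -
  have "setting d p f \<sigma> \<tau>" unfolding setting_def using assms by blast
  then show ?thesis by (rule setting.main)
qed


end
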